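(* Suppose: (1) $F:\mathbb{R}^d\to\mathbb{R}$ is convex, differentiable and $L$-smooth, with a minimizer $x^\star$; (2) $\zeta_i$ is a random variable depending only on $X_0,\ldots,X_i$ with $\mathbb{E}[\zeta_i\mid X_0,\ldots,X_i]=0$, and $\|\zeta_i\|\le S$ whenever $\|X_j-x^\star\|\le r$ for all $j\le i$. Let $X_0$ satisfy $\|X_0-x^\star\|\le r$ and define recursively $X_{i+1}=X_i-\eta g_i+\sqrt{\eta}\,\xi_i$, where $g_i=\nabla F(X_i)+\zeta_i$ and $\xi_i\sim N(0,I_d)$. Let $G=\{\|X_j-x^\star\|\le r\ \forall\,1\le j\le i_{\max}\}$. Then whenever $r^2>\|X_0-x^\star\|^2+i_{\max}[2\eta^2(S^2+L^2r^2)+\eta d]$ and $C_\xi\ge\sqrt{2d}$, $$\mathbb{P}(G^c)\le i_{\max}\Bigg[\exp\Bigg(-\frac{\big(r^2-\|X_0-x^\star\|^2-i_{\max}[2\eta^2(S^2+L^2r^2)+\eta d]\big)^2}{2i_{\max}\big(2\eta Sr+2\sqrt{\eta}C_\xi(r+\eta S+\eta Lr)+\eta C_\xi^2\big)^2}\Bigg)+\exp\Big(-\frac{C_\xi^2-d}{8}\Big)\Bigg].$$ *)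

theory Defs
  imports "HOL-Probability.Probability"
begin

definition gen_sigma :: "'a measure \<Rightarrow> ('a \<Rightarrow> 'b::topological_space) set \<Rightarrow> 'a measure" where
  "gen_sigma M Ys = sigma (space M) (\<Union>Y\<in>Ys. {Y -` A \<inter> space M | A. A \<in> sets borel})"

definition std_gaussian_vec :: "'a measure \<Rightarrow> ('a \<Rightarrow> real^'d) \<Rightarrow> bool" where
  "std_gaussian_vec M Y \<longleftrightarrow>
     distributed M lborel Y
       (\<lambda>x. ennreal ((2 * pi) powr (- real CARD('d) / 2) * exp (- (norm x)\<^sup>2 / 2)))"

end

theory Submission
  imports Defs
begin

lemma cosh_le_exp_sq: "cosh (y::real) \<le> exp (y\<^sup>2 / 2)"
proof -
  have key: "cosh y \<le> exp (y\<^sup>2/2)" if "y \<ge> 0" for y :: real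
  proof -
    have h: "-(2*y) * (1/2) + ln (1 + (1/2) * (exp (2*y) - 1)) \<le> (2*y)\<^sup>2 / 8"
      using Hoeffdings_lemma_aux[of "2*y" "1/2"] that by simp
    have pos: "1 + (1/2) * (exp (2*y) - 1) > 0" by (simp add: algebra_simps add_pos_pos)
    have e: "exp (-y) * exp (2*y) = exp y" by (simp add: mult_exp_exp)
    have "cosh y = exp (-y) * (1 + (1/2) * (exp (2*y) - 1))"
      unfolding cosh_def using e by (simp add: algebra_simps)
    also have "\<dots> = exp (-y + ln (1 + (1/2) * (exp (2*y) - 1)))"
      by (subst exp_add, subst exp_ln[OF pos], rule refl)
    also have "\<dots> \<le> exp (y\<^sup>2/2)" using h by (simp add: power2_eq_square)
    finally show ?thesis .
  qed
  show ?thesis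
  proof (cases "y \<ge> 0")
    case True then show ?thesis using key by simp
  next
    case False then show ?thesis using key[of "-y"] by simp
  qed
qed


lemma key_quad:
  fixes p C :: real
  assumes p: "p \<ge> 0" and C2: "C\<^sup>2 \<ge> 2" and C0: "C \<ge> 0"
  shows "(16/9) * p\<^sup>2 \<le> (C\<^sup>2 + 2*p*C - 4/3) * (p + C)\<^sup>2"
proof (cases "p \<le> C")
  case True
  have "(2*p)\<^sup>2 \<le> (p + C)\<^sup>2" using True p by (intro power_mono) auto
  then have "4 * p\<^sup>2 \<le> (p + C)\<^sup>2" by (simp add: power_mult_distrib)
  moreover have "C\<^sup>2 + 2*p*C - 4/3 \<ge> 2/3" using C2 mult_nonneg_nonneg[OF p C0] by linarith
  ultimately have "(2/3) * (4 * p\<^sup>2) \<le> (C\<^sup>2 + 2*p*C - 4/3) * (p + C)\<^sup>2"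
    by (intro mult_mono) auto
  then show ?thesis using zero_le_power2[of p] by linarith
next
  case False
  have "p * C \<ge> C * C" using False C0 by (simp add: mult_right_mono)
  then have "C\<^sup>2 + 2*p*C - 4/3 \<ge> 16/9" using C2 by (simp add: power2_eq_square)
  moreover have "p\<^sup>2 \<le> (p + C)\<^sup>2" using p C0 by (simp add: power_mono)
  ultimately have "(16/9) * p\<^sup>2 \<le> (C\<^sup>2 + 2*p*C - 4/3) * (p + C)\<^sup>2"
    by (intro mult_mono) auto
  then show ?thesis by simp
qed

lemma main_real:
  fixes \<eta> r S L C d lam u2 e2 D c :: real
  assumes eta: "\<eta> > 0" and r: "r > 0" and S: "S \<ge> 0" and L: "L \<ge> 0" and d1: "d \<ge> 1"
    and C0: "C \<ge> 0" and C2: "C\<^sup>2 \<ge> 2*d" and lam0: "lam \<ge> 0"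
    and lamc: "lam * c\<^sup>2 \<le> r\<^sup>2" and rd: "\<eta>*d \<le> r\<^sup>2"
    and u2: "0 \<le> u2" "u2 \<le> e2" "e2 \<le> r\<^sup>2"
    and Ddef: "D = 2*\<eta>\<^sup>2*(S\<^sup>2+L\<^sup>2*r\<^sup>2) + \<eta>*d"
    and cdef: "c = 2*\<eta>*S*r + 2 * sqrt \<eta>*C*(r + \<eta>*S + \<eta>*L*r) + \<eta>*C\<^sup>2"
  shows "(1 - 2*lam*\<eta>) powr (-d/2) * exp (lam*(u2 + \<eta>\<^sup>2*S\<^sup>2)/(1-2*lam*\<eta>) - lam*(e2 + D))
           * cosh (2*lam*\<eta>*r*S/(1-2*lam*\<eta>)) \<le> exp (lam\<^sup>2*c\<^sup>2/2)"
proof -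
  define hq where "hq = sqrt \<eta>"
  have s0: "hq > 0" and hh: "hq*hq = \<eta>" using eta by (auto simp: hq_def)
  define p where "p = hq * S"
  have p0: "p \<ge> 0" using s0 S by (simp add: p_def)
  define x where "x = lam * \<eta>"
  define \<beta> where "\<beta> = 1 - 2*x"
  have x0: "x \<ge> 0" using lam0 eta by (simp add: x_def)
  have C2': "C\<^sup>2 \<ge> 2" using C2 d1 by linarith
  have C1: "C \<ge> 1"
  proof (rule ccontr)
    assume "\<not> C \<ge> 1"
    then have "C*C \<le> 1*1" using C0 by (intro mult_mono) auto
    then show False using C2' by (simp add: power2_eq_square)
  qed
  have c_lb: "c \<ge> 2*hq*r*(p + C) + \<eta>*C\<^sup>2"
  proof -
    have "2*\<eta>*S*r = 2*hq*r*p" using hh by (simp add: p_def algebra_simps)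
    moreover have "2 * sqrt \<eta>*C*(r + \<eta>*S + \<eta>*L*r) \<ge> 2*hq*r*C"
    proof -
      have "r \<le> r + \<eta>*S + \<eta>*L*r" using eta S L r by (simp add: mult_nonneg_nonneg)
      then have "(2*hq*C)*r \<le> (2*hq*C)*(r + \<eta>*S + \<eta>*L*r)"
        using s0 C0 by (intro mult_left_mono) auto
      then show ?thesis unfolding hq_def by (simp add: mult_ac)
    qed
    moreover have "2*hq*r*(p + C) = 2*hq*r*p + 2*hq*r*C" by (simp add: algebra_simps)
    ultimately show ?thesis unfolding cdef by linarith
  qed
  have A0: "2*hq*r*(p + C) \<ge> 0" using s0 r p0 C0 by simp
  have c_sq: "c\<^sup>2 \<ge> (2*hq*r*(p + C) + \<eta>*C\<^sup>2)\<^sup>2"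
    using c_lb A0 eta by (intro power_mono) auto
  have "(2*hq*r*(p + C) + \<eta>*C\<^sup>2)\<^sup>2 \<ge> (2*hq*r*(p + C))\<^sup>2"
    using A0 eta by (intro power_mono) auto
  have xq: "4 * x * (p+C)\<^sup>2 \<le> 1"
  proof -
    have "lam * (2*hq*r*(p + C))\<^sup>2 \<le> lam * c\<^sup>2"
      using \<open>(2*hq*r*(p + C) + \<eta>*C\<^sup>2)\<^sup>2 \<ge> (2*hq*r*(p + C))\<^sup>2\<close> c_sq lam0
      by (intro mult_left_mono) auto
    also have "\<dots> \<le> r\<^sup>2" by (rule lamc)
    finally have "lam * (2*hq*r*(p + C))\<^sup>2 \<le> r\<^sup>2" .
    moreover have "lam * (2*hq*r*(p + C))\<^sup>2 = (4 * x * (p+C)\<^sup>2) * r\<^sup>2"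
      unfolding x_def hh[symmetric] by (simp add: power_mult_distrib power2_eq_square algebra_simps)
    ultimately show ?thesis using r by simp
  qed
  have pC2: "(p+C)\<^sup>2 \<ge> 2"
  proof -
    have "(p+C)\<^sup>2 \<ge> C\<^sup>2" using p0 C0 by (intro power_mono) auto
    then show ?thesis using C2' by linarith
  qed
  have "4*x*2 \<le> 4*x*(p+C)\<^sup>2" using pC2 x0 by (intro mult_left_mono) auto
  then have x8: "x \<le> 1/8" using xq by linarith
  have b34: "\<beta> \<ge> 3/4" using x8 by (simp add: \<beta>_def)
  have bpos: "\<beta> > 0" using b34 by simp
  have b1: "\<beta> \<le> 1" using x0 by (simp add: \<beta>_def)
  have lnb: "ln \<beta> \<ge> -(2*x) - 2*(2*x)\<^sup>2"
    unfolding \<beta>_def using ln_one_minus_pos_lower_bound[of "2*x"] x0 x8 by simp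
  have T1: "\<beta> powr (-d/2) \<le> exp (d*x + 4*d*x\<^sup>2)"
  proof -
    have "\<beta> powr (-d/2) = exp (-d/2 * ln \<beta>)" using bpos by (simp add: powr_def)
    also have "\<dots> \<le> exp (d*x + 4*d*x\<^sup>2)"
    proof -
      have "-d/2 * ln \<beta> \<le> -d/2 * (-(2*x) - 2*(2*x)\<^sup>2)"
        using lnb d1 by (intro mult_left_mono_neg) auto
      then show ?thesis by (simp add: power2_eq_square algebra_simps)
    qed
    finally show ?thesis .
  qed
  define y where "y = 2*x*r*S/\<beta>"
  have T4: "cosh y \<le> exp (y\<^sup>2/2)" by (rule cosh_le_exp_sq)
  have Ea: "lam*u2/\<beta> - lam*e2 \<le> 2*lam*x*r\<^sup>2/\<beta>"
  proof -
    have "lam*u2/\<beta> \<le> lam*e2/\<beta>" using u2 lam0 bpos by (simp add: divide_right_mono mult_left_mono)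
    moreover have "lam*e2/\<beta> - lam*e2 = lam*e2*(2*x)/\<beta>" using bpos by (simp add: field_simps \<beta>_def)
    moreover have "lam*e2*(2*x)/\<beta> \<le> lam*r\<^sup>2*(2*x)/\<beta>"
      using u2 lam0 x0 bpos by (intro divide_right_mono mult_right_mono mult_left_mono) auto
    ultimately show ?thesis by (simp add: algebra_simps)
  qed
  have Eb: "lam*(\<eta>\<^sup>2*S\<^sup>2)/\<beta> \<le> 2*lam*\<eta>\<^sup>2*S\<^sup>2"
  proof -
    have "1/\<beta> \<le> 2" using b34 bpos by (simp add: field_simps)
    then have "lam*(\<eta>\<^sup>2*S\<^sup>2) * (1/\<beta>) \<le> lam*(\<eta>\<^sup>2*S\<^sup>2) * 2"
      using lam0 by (intro mult_left_mono) auto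
    then show ?thesis by simp
  qed
  have Ec: "lam*D \<ge> 2*lam*\<eta>\<^sup>2*S\<^sup>2 + d*x"
    using lam0 eta L r unfolding Ddef x_def by (simp add: algebra_simps mult_nonneg_nonneg)
  define E where "E = d*x + 4*d*x\<^sup>2 + (lam*(u2 + \<eta>\<^sup>2*S\<^sup>2)/(1-2*lam*\<eta>) - lam*(e2 + D)) + y\<^sup>2/2"
  have E1: "E \<le> 4*d*x\<^sup>2 + 2*lam*x*r\<^sup>2/\<beta> + y\<^sup>2/2"
  proof -
    have "1-2*lam*\<eta> = \<beta>" by (simp add: \<beta>_def x_def)
    then have "lam*(u2 + \<eta>\<^sup>2*S\<^sup>2)/(1-2*lam*\<eta>) = lam*u2/\<beta> + lam*(\<eta>\<^sup>2*S\<^sup>2)/\<beta>"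
      by (simp add: add_divide_distrib distrib_left)
    then show ?thesis using Ea Eb Ec unfolding E_def by (simp add: algebra_simps)
  qed
  have y2: "y\<^sup>2/2 = 2*lam\<^sup>2*\<eta>*r\<^sup>2*p\<^sup>2/\<beta>\<^sup>2"
    unfolding y_def x_def p_def hh[symmetric] by (simp add: power2_eq_square field_simps)
  have Q1: "8*d*\<eta>\<^sup>2 \<le> 4*hq*r*C*\<eta>*C\<^sup>2 + (\<eta>*C\<^sup>2)\<^sup>2"
  proof -
    have "(\<eta>*C\<^sup>2)\<^sup>2 \<ge> (\<eta>*(2*d))\<^sup>2" using C2 eta d1 by (intro power_mono mult_left_mono) auto
    moreover have "(\<eta>*(2*d))\<^sup>2 \<ge> 4*d*\<eta>\<^sup>2" using d1 eta by (simp add: power2_eq_square algebra_simps mult_right_mono)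
    moreover have "r \<ge> hq"
    proof -
      have "\<eta>*1 \<le> \<eta>*d" using d1 eta by (intro mult_left_mono) auto
      then have "hq\<^sup>2 \<le> r\<^sup>2" using rd hh by (simp add: power2_eq_square)
      then show ?thesis using r s0 by (simp add: power2_le_iff_abs_le abs_le_iff) 
    qed
    moreover have "C*C\<^sup>2 \<ge> d"
    proof -
      have "C*C\<^sup>2 \<ge> 1*(2*d)" using C1 C2 d1 by (intro mult_mono) auto
      then show ?thesis using d1 by simp
    qed
    ultimately have "(hq*r)*(C*C\<^sup>2) \<ge> (hq*hq)*d"
      using s0 d1 by (intro mult_mono) auto
    then have "(4*\<eta>)*((hq*r)*(C*C\<^sup>2)) \<ge> (4*\<eta>)*((hq*hq)*d)"
      using eta by (intro mult_left_mono) auto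
    then have "4*hq*r*C*\<eta>*C\<^sup>2 \<ge> 4*hq*hq*d*\<eta>" by (simp add: algebra_simps)
    then show ?thesis using hh \<open>(\<eta>*C\<^sup>2)\<^sup>2 \<ge> (\<eta>*(2*d))\<^sup>2\<close> \<open>(\<eta>*(2*d))\<^sup>2 \<ge> 4*d*\<eta>\<^sup>2\<close>
      by (simp add: power2_eq_square algebra_simps)
  qed
  have Q2: "4*\<eta>*r\<^sup>2/\<beta> + 4*\<eta>*r\<^sup>2*p\<^sup>2/\<beta>\<^sup>2 \<le> 4*\<eta>*r\<^sup>2*(p+C)\<^sup>2"
  proof -
    have i1: "1/\<beta> \<le> 4/3" using b34 bpos by (simp add: field_simps)
    have i2: "p\<^sup>2/\<beta>\<^sup>2 \<le> p\<^sup>2 + (16/9)*p\<^sup>2*(4*x)"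
    proof -
      have "p\<^sup>2/\<beta>\<^sup>2 - p\<^sup>2 = p\<^sup>2 * (1 - \<beta>\<^sup>2)/\<beta>\<^sup>2" using bpos by (simp add: field_simps)
      also have "\<dots> \<le> p\<^sup>2 * (4*x) / \<beta>\<^sup>2"
      proof -
        have ib: "1 - \<beta>\<^sup>2 \<le> 4*x" using x0 unfolding \<beta>_def by (simp add: power2_eq_square algebra_simps)
        show ?thesis using ib by (intro divide_right_mono mult_left_mono) auto
      qed
      also have "\<dots> = p\<^sup>2 * (4*x) * (1/\<beta>)\<^sup>2" by (simp add: power2_eq_square field_simps)
      also have "\<dots> \<le> p\<^sup>2 * (4*x) * (4/3)\<^sup>2"
        using i1 bpos x0 by (intro mult_left_mono power_mono) auto
      finally have h: "p\<^sup>2/\<beta>\<^sup>2 - p\<^sup>2 \<le> p\<^sup>2 * (4*x) * (4/3)\<^sup>2" .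
      have "p\<^sup>2 * (4*x) * (4/3)\<^sup>2 = (16/9)*p\<^sup>2*(4*x)" by (simp add: power2_eq_square)
      then show ?thesis using h by linarith
    qed
    have i3: "(16/9)*p\<^sup>2*(4*x) \<le> C\<^sup>2 + 2*p*C - 4/3"
    proof -
      have "(16/9)*p\<^sup>2*(4*x*(p+C)\<^sup>2) \<le> (16/9)*p\<^sup>2*1"
        using xq by (intro mult_left_mono) auto
      then have "(16/9)*p\<^sup>2*(4*x) * (p+C)\<^sup>2 \<le> (16/9)*p\<^sup>2"
        by (simp add: mult.assoc)
      also have "\<dots> \<le> (C\<^sup>2 + 2*p*C - 4/3) * (p + C)\<^sup>2" using key_quad[OF p0 _ C0] C2' by simp
      finally have f: "(16/9)*p\<^sup>2*(4*x) * (p+C)\<^sup>2 \<le> (C\<^sup>2 + 2*p*C - 4/3) * (p + C)\<^sup>2" .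
      from f show ?thesis by (rule mult_right_le_imp_le) (use pC2 in linarith)
    qed
    have "1/\<beta> + p\<^sup>2/\<beta>\<^sup>2 \<le> (p+C)\<^sup>2" using i1 i2 i3 by (simp add: power2_eq_square algebra_simps)
    then have "4*\<eta>*r\<^sup>2 * (1/\<beta> + p\<^sup>2/\<beta>\<^sup>2) \<le> 4*\<eta>*r\<^sup>2 * (p+C)\<^sup>2"
      using eta by (intro mult_left_mono) auto
    then show ?thesis by (simp add: algebra_simps)
  qed
  have Q3: "(2*hq*r*(p + C) + \<eta>*C\<^sup>2)\<^sup>2 \<ge> 4*\<eta>*r\<^sup>2*(p+C)\<^sup>2 + 4*hq*r*C*\<eta>*C\<^sup>2 + (\<eta>*C\<^sup>2)\<^sup>2"
  proof -
    have "(2*hq*r*(p + C) + \<eta>*C\<^sup>2)\<^sup>2 = 4*\<eta>*r\<^sup>2*(p+C)\<^sup>2 + 4*hq*r*(p+C)*\<eta>*C\<^sup>2 + (\<eta>*C\<^sup>2)\<^sup>2"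
      unfolding hh[symmetric] by (simp add: power2_eq_square algebra_simps)
    moreover have "4*hq*r*(p+C)*\<eta>*C\<^sup>2 \<ge> 4*hq*r*C*\<eta>*C\<^sup>2"
      using s0 r p0 eta by (simp add: mult_left_mono mult_right_mono)
    ultimately show ?thesis by simp
  qed
  have Qall: "8*d*\<eta>\<^sup>2 + 4*\<eta>*r\<^sup>2/\<beta> + 4*\<eta>*r\<^sup>2*p\<^sup>2/\<beta>\<^sup>2 \<le> c\<^sup>2"
    using Q1 Q2 Q3 c_sq by linarith
  have E2: "E \<le> lam\<^sup>2*c\<^sup>2/2"
  proof -
    have "4*d*x\<^sup>2 + 2*lam*x*r\<^sup>2/\<beta> + y\<^sup>2/2 = lam\<^sup>2/2 * (8*d*\<eta>\<^sup>2 + 4*\<eta>*r\<^sup>2/\<beta> + 4*\<eta>*r\<^sup>2*p\<^sup>2/\<beta>\<^sup>2)"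
      unfolding y2 x_def by (simp add: power2_eq_square field_simps)
    also have "\<dots> \<le> lam\<^sup>2/2 * c\<^sup>2" using Qall by (intro mult_left_mono) auto
    finally show ?thesis using E1 by simp
  qed
  have "1 - 2*lam*\<eta> = \<beta>" by (simp add: \<beta>_def x_def)
  have yeq: "2*lam*\<eta>*r*S/(1-2*lam*\<eta>) = y" unfolding y_def x_def \<beta>_def by (simp add: mult.assoc)
  have "(1 - 2*lam*\<eta>) powr (-d/2) * exp (lam*(u2 + \<eta>\<^sup>2*S\<^sup>2)/(1-2*lam*\<eta>) - lam*(e2 + D))
           * cosh (2*lam*\<eta>*r*S/(1-2*lam*\<eta>))
        \<le> exp (d*x + 4*d*x\<^sup>2) * exp (lam*(u2 + \<eta>\<^sup>2*S\<^sup>2)/(1-2*lam*\<eta>) - lam*(e2 + D)) * exp (y\<^sup>2/2)"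
    unfolding yeq unfolding \<open>1 - 2*lam*\<eta> = \<beta>\<close>
    using T1 T4 unfolding x_def by (intro mult_mono) auto
  also have "\<dots> = exp E" unfolding E_def by (simp add: exp_add[symmetric])
  also have "\<dots> \<le> exp (lam\<^sup>2*c\<^sup>2/2)" using E2 by simp
  finally show ?thesis .
qed

lemma line_deriv:
  fixes F :: "'a::real_inner \<Rightarrow> real"
  assumes gradF: "\<And>x. (F has_derivative (\<lambda>h. gradF x \<bullet> h)) (at x)"
  shows "((\<lambda>t. F (x + t *\<^sub>R v)) has_real_derivative (gradF (x + t *\<^sub>R v) \<bullet> v)) (at t)"
proof -
  have "((\<lambda>t. x + t *\<^sub>R v) has_derivative (\<lambda>h. h *\<^sub>R v)) (at t)"
    by (auto intro!: derivative_eq_intros)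
  then have "((\<lambda>t. F (x + t *\<^sub>R v)) has_derivative (\<lambda>h. gradF (x + t *\<^sub>R v) \<bullet> (h *\<^sub>R v))) (at t)"
    by (rule has_derivative_compose[OF _ gradF])
  then show ?thesis unfolding has_field_derivative_def
    by (rule has_derivative_eq_rhs) (auto simp: inner_scaleR_right mult.commute)
qed

lemma convex_grad_ineq:
  fixes F :: "'a::real_inner \<Rightarrow> real"
  assumes convF: "convex_on UNIV F"
    and gradF: "\<And>x. (F has_derivative (\<lambda>h. gradF x \<bullet> h)) (at x)"
  shows "F y - F x \<ge> gradF x \<bullet> (y - x)"
proof -
  define v where "v = y - x"
  define \<phi> where "\<phi> = (\<lambda>t::real. F (x + t *\<^sub>R v))"
  have cphi: "convex_on UNIV \<phi>"
  proof (rule convex_onI)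
    fix t a b :: real assume t: "0 < t" "t < 1" and "a \<in> UNIV" "b \<in> UNIV"
    have "x + ((1 - t) * a + t * b) *\<^sub>R v = (1 - t) *\<^sub>R (x + a *\<^sub>R v) + t *\<^sub>R (x + b *\<^sub>R v)"
      by (simp add: algebra_simps)
    then show "\<phi> ((1 - t) *\<^sub>R a + t *\<^sub>R b) \<le> (1 - t) * \<phi> a + t * \<phi> b"
      unfolding \<phi>_def using convex_onD[OF convF, of t] t by simp
  qed simp
  have d: "(\<phi> has_field_derivative (gradF x \<bullet> v)) (at 0 within UNIV)"
    unfolding \<phi>_def using line_deriv[OF gradF, of x v 0] by simp
  have "\<phi> 1 - \<phi> 0 \<ge> (gradF x \<bullet> v) * (1 - 0)"
    by (rule convex_on_imp_above_tangent[OF cphi _ _ _ d]) auto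
  then show ?thesis by (simp add: \<phi>_def v_def)
qed

lemma descent:
  fixes F :: "'a::real_inner \<Rightarrow> real"
  assumes gradF: "\<And>x. (F has_derivative (\<lambda>h. gradF x \<bullet> h)) (at x)"
    and smooth: "\<And>x y. norm (gradF x - gradF y) \<le> L * norm (x - y)"
  shows "F (x + v) \<le> F x + gradF x \<bullet> v + L/2 * (norm v)\<^sup>2"
proof -
  define \<psi> where "\<psi> = (\<lambda>t::real. F (x + t *\<^sub>R v) - t * (gradF x \<bullet> v) - L/2 * t\<^sup>2 * (norm v)\<^sup>2)"
  have "\<psi> 0 \<ge> \<psi> 1"
  proof (rule DERIV_nonpos_imp_nonincreasing[of 0 1 \<psi>])
    fix t :: real assume t: "0 \<le> t" "t \<le> 1"
    have D: "(\<psi> has_real_derivative (gradF (x + t *\<^sub>R v) \<bullet> v - gradF x \<bullet> v - L * t * (norm v)\<^sup>2)) (at t)"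
      unfolding \<psi>_def
      by (rule derivative_eq_intros line_deriv[OF gradF] | simp)+
    have "gradF (x + t *\<^sub>R v) \<bullet> v - gradF x \<bullet> v = (gradF (x + t *\<^sub>R v) - gradF x) \<bullet> v"
      by (simp add: inner_diff_left)
    also have "\<dots> \<le> norm (gradF (x + t *\<^sub>R v) - gradF x) * norm v" by (rule norm_cauchy_schwarz)
    also have "\<dots> \<le> (L * norm (t *\<^sub>R v)) * norm v"
      using smooth[of "x + t *\<^sub>R v" x] by (intro mult_right_mono) auto
    also have "\<dots> = L * t * (norm v)\<^sup>2" using t by (simp add: power2_eq_square)
    finally have "gradF (x + t *\<^sub>R v) \<bullet> v - gradF x \<bullet> v - L * t * (norm v)\<^sup>2 \<le> 0" by simp
    then show "\<exists>y. (\<psi> has_real_derivative y) (at t) \<and> y \<le> 0" using D by blast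
  qed simp
  then show ?thesis by (simp add: \<psi>_def)
qed

lemma grad_step_nonexpansive:
  fixes F :: "'a::real_inner \<Rightarrow> real"
  assumes convF: "convex_on UNIV F"
    and gradF: "\<And>x. (F has_derivative (\<lambda>h. gradF x \<bullet> h)) (at x)"
    and smooth: "\<And>x y. norm (gradF x - gradF y) \<le> L * norm (x - y)"
    and minim: "\<And>x. F xs \<le> F x"
    and eta: "\<eta> > 0" and etaL: "\<eta> * L \<le> 1"
  shows "norm (x - xs - \<eta> *\<^sub>R gradF x) \<le> norm (x - xs)"
proof -
  have g0: "gradF xs = 0"
  proof -
    have "(\<lambda>h. gradF xs \<bullet> h) = (\<lambda>v. 0)"
      by (rule differential_zero_maxmin[of xs UNIV F]) (use gradF minim in auto)
    then have "gradF xs \<bullet> gradF xs = 0" by metis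
    then show ?thesis by simp
  qed
  define g where "g = gradF x"
  define e where "e = x - xs"
  show ?thesis
  proof (cases "L > 0")
    case False
    then have "norm (gradF x - gradF xs) \<le> 0"
      using smooth[of x xs] by (smt (verit) mult_nonpos_nonneg norm_ge_zero)
    then have "gradF x = 0" using g0 by simp
    then show ?thesis by simp
  next
    case True
    have "F (x + (-(1/L)) *\<^sub>R g) \<le> F x + g \<bullet> ((-(1/L)) *\<^sub>R g) + L/2 * (norm ((-(1/L)) *\<^sub>R g))\<^sup>2"
      unfolding g_def by (rule descent[OF gradF smooth])
    also have "\<dots> = F x - (norm g)\<^sup>2 / (2*L)"
      using True by (simp add: power2_eq_square field_simps power_mult_distrib inner_commute flip: power2_norm_eq_inner)
    finally have d: "F (x + (-(1/L)) *\<^sub>R g) \<le> F x - (norm g)\<^sup>2 / (2*L)" .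
    have cv: "F xs - F x \<ge> g \<bullet> (xs - x)" unfolding g_def by (rule convex_grad_ineq[OF convF gradF])
    have ge: "g \<bullet> e \<ge> (norm g)\<^sup>2 / (2*L)"
      using d cv minim[of "x + (-(1/L)) *\<^sub>R g"] unfolding e_def by (simp add: inner_diff_right)
    have "(norm (e - \<eta> *\<^sub>R g))\<^sup>2 = (norm e)\<^sup>2 - 2*\<eta>*(g \<bullet> e) + \<eta>\<^sup>2 * (norm g)\<^sup>2"
      unfolding power2_norm_eq_inner by (simp add: inner_diff_left inner_diff_right inner_commute algebra_simps power2_eq_square)
    also have "\<dots> \<le> (norm e)\<^sup>2 - 2*\<eta>*((norm g)\<^sup>2 / (2*L)) + \<eta>\<^sup>2 * (norm g)\<^sup>2"
    proof -
      have "2*\<eta>*((norm g)\<^sup>2 / (2*L)) \<le> 2*\<eta>*(g \<bullet> e)" using ge eta by (intro mult_left_mono) auto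
      then show ?thesis by linarith
    qed
    also have "\<dots> = (norm e)\<^sup>2 - \<eta> * (norm g)\<^sup>2 * (1/L - \<eta>)"
      using True by (simp add: field_simps power2_eq_square)
    also have "\<dots> \<le> (norm e)\<^sup>2"
    proof -
      have "1/L - \<eta> \<ge> 0" using etaL True by (simp add: field_simps mult.commute)
      then show ?thesis using eta by (simp add: mult_nonneg_nonneg)
    qed
    finally have "(norm (e - \<eta> *\<^sub>R g))\<^sup>2 \<le> (norm e)\<^sup>2" .
    then have "norm (e - \<eta> *\<^sub>R g) \<le> norm e" by (simp add: power2_le_iff_abs_le)
    then show ?thesis by (simp add: e_def g_def)
  qed
qed

lemma nn_integral_lborel_affine:
  fixes f :: "'b::euclidean_space \<Rightarrow> ennreal"
  assumes c: "c \<noteq> 0" and f[measurable]: "f \<in> borel_measurable borel"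
  shows "(\<integral>\<^sup>+x. f x \<partial>lborel) = (\<integral>\<^sup>+z. ennreal (\<bar>c\<bar>^DIM('b)) * f (t + c *\<^sub>R z) \<partial>lborel)"
proof -
  have eq: "lborel = density (distr lborel borel (\<lambda>x. t + c *\<^sub>R x)) (\<lambda>_. \<bar>c\<bar>^DIM('b))"
    by (rule lborel_affine[OF c])
  have "(\<integral>\<^sup>+x. f x \<partial>lborel) = (\<integral>\<^sup>+x. f x \<partial>(density (distr lborel borel (\<lambda>x. t + c *\<^sub>R x)) (\<lambda>_. \<bar>c\<bar>^DIM('b))))"
    using arg_cong[OF eq, of "\<lambda>M. integral\<^sup>N M f"] .
  also have "\<dots> = (\<integral>\<^sup>+x. ennreal (\<bar>c\<bar>^DIM('b)) * f x \<partial>(distr lborel borel (\<lambda>x. t + c *\<^sub>R x)))"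
    by (subst nn_integral_density) auto
  also have "\<dots> = (\<integral>\<^sup>+z. ennreal (\<bar>c\<bar>^DIM('b)) * f (t + c *\<^sub>R z) \<partial>lborel)"
    by (subst nn_integral_distr) auto
  finally show ?thesis .
qed

lemma gauss_mgf:
  fixes Y :: "'a \<Rightarrow> real^'d" and w :: "real^'d"
  assumes M: "prob_space M" and G: "std_gaussian_vec M Y"
    and lam: "lam \<ge> 0" and eta: "\<eta> > 0" and lt: "2*lam*\<eta> < 1"
  shows "(\<integral>\<^sup>+y. ennreal (exp (lam * (norm (w + sqrt \<eta> *\<^sub>R y))\<^sup>2)) \<partial>(distr M lborel Y))
       = ennreal ((1 - 2*lam*\<eta>) powr (- real CARD('d)/2) * exp (lam * (norm w)\<^sup>2 / (1 - 2*lam*\<eta>)))"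
proof -
  define d where "d = real CARD('d)"
  define dens where "dens = (\<lambda>x::real^'d. (2 * pi) powr (- d / 2) * exp (- (norm x)\<^sup>2 / 2))"
  define \<beta> where "\<beta> = 1 - 2*lam*\<eta>"
  define hq where "hq = sqrt \<eta>"
  define a where "a = 2*lam*hq/\<beta>"
  define m where "m = a *\<^sub>R w"
  define K where "K = exp (lam * (norm w)\<^sup>2 / \<beta>)"
  have bpos: "\<beta> > 0" using lt by (simp add: \<beta>_def)
  have hh: "hq * hq = \<eta>" using eta by (simp add: hq_def)
  have dens_pos: "dens x \<ge> 0" for x by (simp add: dens_def)
  have D: "distr M lborel Y = density lborel (\<lambda>x. ennreal (dens x))"
    using distributed_distr_eq_density[OF G[unfolded std_gaussian_vec_def]] by (simp add: dens_def d_def)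
  have meas_dens[measurable]: "dens \<in> borel_measurable borel" unfolding dens_def by measurable
  have tot: "(\<integral>\<^sup>+x. ennreal (dens x) \<partial>lborel) = 1"
  proof -
    interpret prob_space M by (rule M)
    have "(\<integral>\<^sup>+x. ennreal (dens x) \<partial>lborel) = emeasure (density lborel (\<lambda>x. ennreal (dens x))) UNIV"
      by (subst emeasure_density) auto
    also have "\<dots> = emeasure (distr M lborel Y) UNIV" using D by simp
    also have "\<dots> = 1"
    proof -
      have "Y \<in> measurable M lborel" using distributed_measurable[OF G[unfolded std_gaussian_vec_def]] .
      then have "prob_space (distr M lborel Y)" by (rule prob_space_distr)
      then show ?thesis using prob_space.emeasure_space_1 by fastforce
    qed
    finally show ?thesis .
  qed
  have pt: "dens y * exp (lam * (norm (w + hq *\<^sub>R y))\<^sup>2) = K * ((2 * pi) powr (- d / 2) * exp (- \<beta>/2 * (norm (y - m))\<^sup>2))" for y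
  proof -
    have e1: "(norm (w + hq *\<^sub>R y))\<^sup>2 = (norm w)\<^sup>2 + 2*hq*(w \<bullet> y) + \<eta> * (norm y)\<^sup>2"
      unfolding power2_norm_eq_inner using hh
      by (simp add: inner_add_left inner_add_right inner_commute algebra_simps)
    have e2: "(norm (y - m))\<^sup>2 = (norm y)\<^sup>2 - 2*a*(w \<bullet> y) + a\<^sup>2 * (norm w)\<^sup>2"
      unfolding power2_norm_eq_inner m_def
      by (simp add: inner_diff_left inner_diff_right inner_commute algebra_simps power2_eq_square)
    have ex: "- (norm y)\<^sup>2 / 2 + lam * ((norm w)\<^sup>2 + 2*hq*(w \<bullet> y) + \<eta> * (norm y)\<^sup>2)
        = lam * (norm w)\<^sup>2 / \<beta> + (- \<beta>/2 * ((norm y)\<^sup>2 - 2*a*(w \<bullet> y) + a\<^sup>2 * (norm w)\<^sup>2))"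
    proof -
      define Q where "Q = (norm y)\<^sup>2"
      define W where "W = (norm w)\<^sup>2"
      define I where "I = w \<bullet> y"
      have a1: "\<beta> * a = 2*lam*hq" using bpos by (simp add: a_def)
      have a2: "\<beta>/2 * a\<^sup>2 = 2*lam\<^sup>2*\<eta>/\<beta>"
        using bpos unfolding a_def hh[symmetric] by (simp add: power2_eq_square)
      have a3: "lam*W/\<beta> - 2*lam\<^sup>2*\<eta>*W/\<beta> = lam*W"
      proof -
        have "lam*W/\<beta> - 2*lam\<^sup>2*\<eta>*W/\<beta> = lam*W*\<beta>/\<beta>"
          unfolding \<beta>_def by (simp add: diff_divide_distrib[symmetric] power2_eq_square algebra_simps)
        then show ?thesis using bpos by simp
      qed
      have a4: "-\<beta>/2*(Q - 2*a*I + a\<^sup>2*W) = -\<beta>/2*Q + (\<beta>*a)*I - (\<beta>/2*a\<^sup>2)*W"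
        by (simp add: algebra_simps)
      have a5: "-\<beta>/2*Q = -Q/2 + lam*\<eta>*Q" by (simp add: \<beta>_def field_simps)
      have a6: "(2*lam\<^sup>2*\<eta>/\<beta>)*W = 2*lam\<^sup>2*\<eta>*W/\<beta>" by simp
      show ?thesis unfolding Q_def[symmetric] W_def[symmetric] I_def[symmetric]
        using a1 a2 a3 a4 a5 a6 by (simp add: algebra_simps)
    qed
    show ?thesis unfolding dens_def K_def e1 e2
      using ex by (simp add: exp_add[symmetric] mult_ac)
  qed
  have "(\<integral>\<^sup>+y. ennreal (exp (lam * (norm (w + sqrt \<eta> *\<^sub>R y))\<^sup>2)) \<partial>(distr M lborel Y))
      = (\<integral>\<^sup>+y. ennreal (dens y) * ennreal (exp (lam * (norm (w + hq *\<^sub>R y))\<^sup>2)) \<partial>lborel)"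
    unfolding D hq_def by (subst nn_integral_density) auto
  also have "\<dots> = (\<integral>\<^sup>+y. ennreal (K * ((2 * pi) powr (- d / 2) * exp (- \<beta>/2 * (norm (y - m))\<^sup>2))) \<partial>lborel)"
    by (simp add: pt ennreal_mult'[symmetric] dens_pos)
  also have "\<dots> = (\<integral>\<^sup>+z. ennreal (\<bar>1 / sqrt \<beta>\<bar>^DIM(real^'d)) *
        ennreal (K * ((2 * pi) powr (- d / 2) * exp (- \<beta>/2 * (norm ((m + (1 / sqrt \<beta>) *\<^sub>R z) - m))\<^sup>2))) \<partial>lborel)"
    by (rule nn_integral_lborel_affine) (use bpos in auto)
  also have "\<dots> = (\<integral>\<^sup>+z. ennreal ((1 / sqrt \<beta>)^CARD('d) * K) * ennreal (dens z) \<partial>lborel)"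
  proof (rule nn_integral_cong)
    fix z :: "real^'d"
    have "- \<beta>/2 * (norm ((m + (1 / sqrt \<beta>) *\<^sub>R z) - m))\<^sup>2 = - (norm z)\<^sup>2 / 2"
      using bpos by (simp add: power_mult_distrib abs_mult power_divide)
    then show "ennreal (\<bar>1 / sqrt \<beta>\<bar>^DIM(real^'d)) *
        ennreal (K * ((2 * pi) powr (- d / 2) * exp (- \<beta>/2 * (norm ((m + (1 / sqrt \<beta>) *\<^sub>R z) - m))\<^sup>2)))
        = ennreal ((1 / sqrt \<beta>)^CARD('d) * K) * ennreal (dens z)"
      using bpos by (simp add: dens_def K_def ennreal_mult'[symmetric] mult_ac)
  qed
  also have "\<dots> = ennreal ((1 / sqrt \<beta>)^CARD('d) * K) * (\<integral>\<^sup>+z. ennreal (dens z) \<partial>lborel)"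
    by (rule nn_integral_cmult) auto
  also have "\<dots> = ennreal ((1 / sqrt \<beta>)^CARD('d) * K)" using tot by simp
  also have "(1 / sqrt \<beta>)^CARD('d) = \<beta> powr (- real CARD('d)/2)"
  proof -
    have "1 / sqrt \<beta> = \<beta> powr (-(1/2))"
      using bpos by (simp only: powr_minus_divide powr_half_sqrt less_imp_le)
    then have "(1 / sqrt \<beta>)^CARD('d) = (\<beta> powr (-(1/2)))^CARD('d)" by simp
    also have "\<dots> = \<beta> powr (real CARD('d) * (-(1/2)))"
      using bpos by (subst powr_power) auto
    finally show ?thesis by simp
  qed
  finally show ?thesis by (simp add: K_def \<beta>_def)
qed

lemma gen_sigma_space: "space (gen_sigma M Ys) = space M"
  unfolding gen_sigma_def by (simp add: space_measure_of_conv)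

lemma gen_sigma_sets: "sets (gen_sigma M Ys) = sigma_sets (space M) (\<Union>Y\<in>Ys. {Y -` A \<inter> space M | A. A \<in> sets borel})"
  unfolding gen_sigma_def by (subst sets_measure_of_conv) auto

lemma gen_sigma_meas: "Y \<in> Ys \<Longrightarrow> Y \<in> borel_measurable (gen_sigma M Ys)"
  by (rule measurableI) (auto simp: gen_sigma_space gen_sigma_sets intro!: sigma_sets.Basic)

lemma gen_sigma_subalg:
  assumes "\<And>Y. Y \<in> Ys \<Longrightarrow> Y \<in> borel_measurable M"
  shows "subalgebra M (gen_sigma M Ys)"
  unfolding subalgebra_def gen_sigma_space gen_sigma_sets
  by (auto intro!: sets.sigma_sets_subset measurable_sets assms)

locale L2setting =
  fixes M :: "'a measure"
    and F :: "real^'d \<Rightarrow> real" and gradF :: "real^'d \<Rightarrow> real^'d"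
    and L S r \<eta> C :: real and xs x0 :: "real^'d"
    and X \<zeta> \<xi> :: "nat \<Rightarrow> 'a \<Rightarrow> real^'d" and imax :: nat
  assumes M: "prob_space M"
    and convF: "convex_on UNIV F"
    and gradF: "\<And>x. (F has_derivative (\<lambda>h. gradF x \<bullet> h)) (at x)"
    and smooth: "\<And>x y. norm (gradF x - gradF y) \<le> L * norm (x - y)"
    and minim: "\<And>x. F xs \<le> F x"
    and \<zeta>_meas: "\<And>i. \<zeta> i \<in> borel_measurable M"
    and \<zeta>_int: "\<And>i k. integrable M (\<lambda>\<omega>. \<zeta> i \<omega> $ k)"
    and \<zeta>_mean: "\<And>i k. AE \<omega> in M.
                  real_cond_exp M (gen_sigma M (X ` {..i})) (\<lambda>\<omega>. \<zeta> i \<omega> $ k) \<omega> = 0"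
    and \<zeta>_bdd: "\<And>i \<omega>. \<omega> \<in> space M \<Longrightarrow> (\<forall>j\<le>i. norm (X j \<omega> - xs) \<le> r) \<Longrightarrow> norm (\<zeta> i \<omega>) \<le> S"
    and \<xi>_meas: "\<And>i. \<xi> i \<in> borel_measurable M"
    and \<xi>_gauss: "\<And>i. std_gaussian_vec M (\<xi> i)"
    and \<xi>_indep: "\<And>i. prob_space.indep_set M
                     (sets (gen_sigma M (insert (\<zeta> i) (X ` {..i}))))
                     (sets (gen_sigma M {\<xi> i}))"
    and X0: "\<And>\<omega>. \<omega> \<in> space M \<Longrightarrow> X 0 \<omega> = x0"
    and x0r: "norm (x0 - xs) \<le> r"
    and Xrec: "\<And>i \<omega>. \<omega> \<in> space M \<Longrightarrow>
                 X (Suc i) \<omega> = X i \<omega> - \<eta> *\<^sub>R (gradF (X i \<omega>) + \<zeta> i \<omega>) + sqrt \<eta> *\<^sub>R \<xi> i \<omega>"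
    and \<eta>_pos: "\<eta> > 0"
    and rbig: "r\<^sup>2 > (norm (x0 - xs))\<^sup>2
                 + real imax * (2 * \<eta>\<^sup>2 * (S\<^sup>2 + L\<^sup>2 * r\<^sup>2) + \<eta> * real CARD('d))"
    and C\<xi>: "C \<ge> sqrt (2 * real CARD('d))"
begin

definition "D0 = 2 * \<eta>\<^sup>2 * (S\<^sup>2 + L\<^sup>2 * r\<^sup>2) + \<eta> * real CARD('d)"
definition "good i \<omega> = (\<forall>j\<in>{..i}. norm (X j \<omega> - xs) \<le> r)"
definition "V i \<omega> = (norm (X (Suc i) \<omega> - xs))\<^sup>2 - (norm (X i \<omega> - xs))\<^sup>2 - D0"
definition "W i \<omega> = (if good i \<omega> then V i \<omega> else 0)"
definition "Ssum k \<omega> = (\<Sum>i<k. W i \<omega>)"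
definition "uu k \<omega> = X k \<omega> - xs - \<eta> *\<^sub>R gradF (X k \<omega>)"
definition "Fk k = gen_sigma M (X ` {..k})"
definition "Sig k = gen_sigma M (insert (\<zeta> k) (X ` {..k}))"

lemma gradF_cont: "continuous_on UNIV gradF"
proof -
  have "(max L 0)-lipschitz_on UNIV gradF"
  proof (rule lipschitz_onI)
    fix x y :: "real^'d"
    have "L * dist x y \<le> max L 0 * dist x y" by (intro mult_right_mono) auto
    then show "dist (gradF x) (gradF y) \<le> max L 0 * dist x y"
      using smooth[of x y] by (simp add: dist_norm)
  qed simp
  then show ?thesis by (rule lipschitz_on_continuous_on)
qed

lemma gradF_meas[measurable]: "gradF \<in> borel_measurable borel"
  by (rule borel_measurable_continuous_onI[OF gradF_cont])

lemma X_meas[measurable]: "X i \<in> borel_measurable M"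
proof (induction i)
  case 0
  show ?case by (subst measurable_cong[where g="\<lambda>\<omega>. x0"]) (auto simp: X0)
next
  case (Suc i)
  note [measurable] = Suc \<zeta>_meas \<xi>_meas
  show ?case
    by (subst measurable_cong[where g = "\<lambda>\<omega>. X i \<omega> - \<eta> *\<^sub>R (gradF (X i \<omega>) + \<zeta> i \<omega>) + sqrt \<eta> *\<^sub>R \<xi> i \<omega>"])
       (auto simp: Xrec)
qed

lemma meas_generic:
  assumes XN: "\<And>j. j \<le> k \<Longrightarrow> X j \<in> borel_measurable N"
  shows good_pred: "\<And>i. i \<le> k \<Longrightarrow> Measurable.pred N (good i)"
    and V_meas: "\<And>i. i < k \<Longrightarrow> V i \<in> borel_measurable N"
    and W_meas: "\<And>i. i < k \<Longrightarrow> W i \<in> borel_measurable N"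
    and Ssum_meas: "Ssum k \<in> borel_measurable N"
    and uu_meas: "uu k \<in> borel_measurable N"
proof -
  show gp: "Measurable.pred N (good i)" if "i \<le> k" for i
    unfolding good_def
  proof (rule pred_intros_finite(3))
    fix j assume "j \<in> {..i}"
    then have [measurable]: "X j \<in> borel_measurable N" using XN that by auto
    show "Measurable.pred N (\<lambda>x. norm (X j x - xs) \<le> r)" by measurable
  qed simp
  show Vm: "V i \<in> borel_measurable N" if "i < k" for i
  proof -
    have [measurable]: "X j \<in> borel_measurable N" if "j \<le> Suc i" for j using XN that \<open>i < k\<close> by auto
    show ?thesis unfolding V_def by measurable
  qed
  show Wm: "W i \<in> borel_measurable N" if "i < k" for i
  proof -
    have [measurable]: "Measurable.pred N (good i)" using gp that by simp
    have [measurable]: "V i \<in> borel_measurable N" using Vm that by simp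
    show ?thesis unfolding W_def by measurable
  qed
  show "Ssum k \<in> borel_measurable N"
    unfolding Ssum_def by (rule borel_measurable_sum) (use Wm in auto)
  have [measurable]: "X k \<in> borel_measurable N" using XN by simp
  show "uu k \<in> borel_measurable N" unfolding uu_def by measurable
qed

lemma Fk_X: "j \<le> k \<Longrightarrow> X j \<in> borel_measurable (Fk k)"
  unfolding Fk_def by (rule gen_sigma_meas) auto

lemma Sig_X: "j \<le> k \<Longrightarrow> X j \<in> borel_measurable (Sig k)"
  unfolding Sig_def by (rule gen_sigma_meas) auto

lemma Sig_zeta: "\<zeta> k \<in> borel_measurable (Sig k)"
  unfolding Sig_def by (rule gen_sigma_meas) auto

lemma subF: "subalgebra M (Fk k)"
  unfolding Fk_def by (rule gen_sigma_subalg) auto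

lemma subS: "subalgebra M (Sig k)"
  unfolding Sig_def by (rule gen_sigma_subalg) (auto intro: \<zeta>_meas)

lemma id_meas_sub:
  assumes sub: "subalgebra M N"
  shows "(\<lambda>\<omega>. \<omega>) \<in> measurable M N"
proof -
  have sS: "space N = space M" "sets N \<subseteq> sets M" using sub by (auto simp: subalgebra_def)
  show ?thesis
  proof (rule measurableI)
    fix A assume "A \<in> sets N"
    then have "A \<subseteq> space M" using sets.sets_into_space sS by fastforce
    then have "(\<lambda>\<omega>. \<omega>) -` A \<inter> space M = A" by auto
    then show "(\<lambda>\<omega>. \<omega>) -` A \<inter> space M \<in> sets M" using \<open>A \<in> sets N\<close> sS by auto
  qed (use sS in auto)
qed

lemma sigma_id_sub:
  assumes sub: "subalgebra M N"
  shows "sigma_sets (space M) {(\<lambda>\<omega>. \<omega>) -` A \<inter> space M |A. A \<in> sets N} \<subseteq> sets N"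
proof -
  have sS: "space N = space M" using sub by (auto simp: subalgebra_def)
  have "{(\<lambda>\<omega>. \<omega>) -` A \<inter> space M |A. A \<in> sets N} \<subseteq> sets N"
  proof (safe)
    fix A assume A: "A \<in> sets N"
    have "A \<subseteq> space M" using sets.sets_into_space[OF A] sS by simp
    then have "(\<lambda>\<omega>. \<omega>) -` A \<inter> space M = A" by auto
    then show "(\<lambda>\<omega>. \<omega>) -` A \<inter> space M \<in> sets N" using A by simp
  qed
  from sets.sigma_sets_subset[OF this] show ?thesis using sS by simp
qed

lemma indep_fubini:
  assumes Phi: "\<Phi> \<in> borel_measurable (Sig k \<Otimes>\<^sub>M lborel)"
  shows "(\<integral>\<^sup>+\<omega>. \<Phi> (\<omega>, \<xi> k \<omega>) \<partial>M) = (\<integral>\<^sup>+\<omega>. (\<integral>\<^sup>+y. \<Phi> (\<omega>, y) \<partial>(distr M lborel (\<xi> k))) \<partial>M)"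
proof -
  interpret prob_space M by (rule M)
  define Sx where "Sx = gen_sigma M {\<xi> k}"
  have subX: "subalgebra M Sx" unfolding Sx_def by (rule gen_sigma_subalg) (auto intro: \<xi>_meas)
  have xiSx[measurable]: "\<xi> k \<in> borel_measurable Sx" unfolding Sx_def by (rule gen_sigma_meas) auto
  have id1: "(\<lambda>\<omega>. \<omega>) \<in> measurable M (Sig k)" by (rule id_meas_sub[OF subS])
  have id2: "(\<lambda>\<omega>. \<omega>) \<in> measurable M Sx" by (rule id_meas_sub[OF subX])
  have xi_meas': "\<xi> k \<in> measurable M lborel" using \<xi>_meas by simp
  have ind: "indep_var (Sig k) (\<lambda>\<omega>. \<omega>) Sx (\<lambda>\<omega>. \<omega>)"
    unfolding indep_var_eq
  proof (intro conjI)
    show "random_variable (Sig k) (\<lambda>\<omega>. \<omega>)" by (rule id1)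
    show "random_variable Sx (\<lambda>\<omega>. \<omega>)" by (rule id2)
    have I: "indep_set (sets (Sig k)) (sets Sx)"
      using \<xi>_indep[of k] unfolding Sig_def Sx_def .
    show "indep_set (sigma_sets (space M) {(\<lambda>\<omega>. \<omega>) -` A \<inter> space M |A. A \<in> sets (Sig k)})
      (sigma_sets (space M) {(\<lambda>\<omega>. \<omega>) -` A \<inter> space M |A. A \<in> sets Sx})"
    proof -
      define S1 where "S1 = sigma_sets (space M) {(\<lambda>\<omega>. \<omega>) -` A \<inter> space M |A. A \<in> sets (Sig k)}"
      define S2 where "S2 = sigma_sets (space M) {(\<lambda>\<omega>. \<omega>) -` A \<inter> space M |A. A \<in> sets Sx}"
      have s1: "S1 \<subseteq> sets (Sig k)" unfolding S1_def by (rule sigma_id_sub[OF subS])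
      have s2: "S2 \<subseteq> sets Sx" unfolding S2_def by (rule sigma_id_sub[OF subX])
      have I1: "sets (Sig k) \<subseteq> events" and I2: "sets Sx \<subseteq> events"
        and I3: "\<forall>a\<in>sets (Sig k). \<forall>b\<in>sets Sx. prob (a \<inter> b) = prob a * prob b"
        using I unfolding indep_sets2_eq by simp_all
      have "indep_set S1 S2" unfolding indep_sets2_eq
      proof (intro conjI ballI)
        show "S1 \<subseteq> events" using s1 I1 by (rule order_trans)
        show "S2 \<subseteq> events" using s2 I2 by (rule order_trans)
        fix a b assume "a \<in> S1" "b \<in> S2"
        then show "prob (a \<inter> b) = prob a * prob b" using I3 s1 s2 by (meson subsetD)
      qed
      then show ?thesis unfolding S1_def S2_def .
    qed
  qed
  have eq: "distr M (Sig k) (\<lambda>\<omega>. \<omega>) \<Otimes>\<^sub>M distr M Sx (\<lambda>\<omega>. \<omega>) = distr M (Sig k \<Otimes>\<^sub>M Sx) (\<lambda>\<omega>. (\<omega>, \<omega>))"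
    using ind indep_var_distribution_eq by blast
  interpret N: prob_space "distr M Sx (\<lambda>\<omega>. \<omega>)" by (rule prob_space_distr[OF id2])
  define \<Psi> where "\<Psi> = (\<lambda>z. \<Phi> (fst z, \<xi> k (snd z)))"
  have Psi1: "\<Psi> \<in> borel_measurable (Sig k \<Otimes>\<^sub>M Sx)"
  proof -
    have xl: "\<xi> k \<in> measurable Sx lborel" using xiSx by simp
    show ?thesis unfolding \<Psi>_def
      by (rule measurable_compose[OF measurable_Pair[OF measurable_fst measurable_compose[OF measurable_snd xl]] Phi])
  qed
  have PsiN: "\<Psi> \<in> borel_measurable (distr M (Sig k) (\<lambda>\<omega>. \<omega>) \<Otimes>\<^sub>M distr M Sx (\<lambda>\<omega>. \<omega>))"
    using Psi1 by simp
  have PsiN2: "\<Psi> \<in> borel_measurable (Sig k \<Otimes>\<^sub>M distr M Sx (\<lambda>\<omega>. \<omega>))"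
    using Psi1 by simp
  have "(\<integral>\<^sup>+\<omega>. \<Phi> (\<omega>, \<xi> k \<omega>) \<partial>M) = (\<integral>\<^sup>+\<omega>. \<Psi> (\<omega>, \<omega>) \<partial>M)" by (simp add: \<Psi>_def)
  also have "\<dots> = (\<integral>\<^sup>+z. \<Psi> z \<partial>(distr M (Sig k \<Otimes>\<^sub>M Sx) (\<lambda>\<omega>. (\<omega>, \<omega>))))"
    by (subst nn_integral_distr) (auto intro!: measurable_Pair id1 id2 Psi1)
  also have "\<dots> = (\<integral>\<^sup>+z. \<Psi> z \<partial>(distr M (Sig k) (\<lambda>\<omega>. \<omega>) \<Otimes>\<^sub>M distr M Sx (\<lambda>\<omega>. \<omega>)))"
    using eq by simp
  also have "\<dots> = (\<integral>\<^sup>+x. (\<integral>\<^sup>+y. \<Psi> (x, y) \<partial>(distr M Sx (\<lambda>\<omega>. \<omega>))) \<partial>(distr M (Sig k) (\<lambda>\<omega>. \<omega>)))"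
    by (rule N.nn_integral_fst[OF PsiN, symmetric])
  also have "\<dots> = (\<integral>\<^sup>+x. (\<integral>\<^sup>+y. \<Psi> (x, y) \<partial>(distr M Sx (\<lambda>\<omega>. \<omega>))) \<partial>M)"
    by (subst nn_integral_distr) (auto intro!: id1 N.borel_measurable_nn_integral_fst PsiN2)
  also have "\<dots> = (\<integral>\<^sup>+\<omega>. (\<integral>\<^sup>+y. \<Phi> (\<omega>, y) \<partial>(distr M lborel (\<xi> k))) \<partial>M)"
  proof (rule nn_integral_cong)
    fix x assume x: "x \<in> space M"
    have x': "x \<in> space (Sig k)" using x subS[of k] by (simp add: subalgebra_def)
    have m1: "(\<lambda>y. \<Phi> (x, y)) \<in> borel_measurable lborel"
      using measurable_Pair2[OF Phi x'] by simp
    have "(\<integral>\<^sup>+y. \<Psi> (x, y) \<partial>(distr M Sx (\<lambda>\<omega>. \<omega>))) = (\<integral>\<^sup>+y. \<Phi> (x, \<xi> k y) \<partial>M)"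
    proof -
      have xl: "\<xi> k \<in> measurable Sx lborel" using xiSx by simp
      show ?thesis unfolding \<Psi>_def
        by (subst nn_integral_distr) (auto intro!: id2 measurable_compose[OF xl m1])
    qed
    also have "\<dots> = (\<integral>\<^sup>+y. \<Phi> (x, y) \<partial>(distr M lborel (\<xi> k)))"
      by (subst nn_integral_distr) (use \<xi>_meas[of k] m1 in simp_all)
    finally show "(\<integral>\<^sup>+y. \<Psi> (x, y) \<partial>(distr M Sx (\<lambda>\<omega>. \<omega>))) = (\<integral>\<^sup>+y. \<Phi> (x, y) \<partial>(distr M lborel (\<xi> k)))" .
  qed
  finally show ?thesis .
qed

end

lemma vec_nth_meas[measurable (raw)]:
  fixes f :: "'b \<Rightarrow> real^'n"
  assumes "f \<in> borel_measurable N"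
  shows "(\<lambda>x. f x $ i) \<in> borel_measurable N"
proof -
  have "(\<lambda>v::real^'n. v $ i) \<in> borel_measurable borel"
    by (rule borel_measurable_continuous_onI) (intro continuous_on_component continuous_on_id)
  from measurable_compose[OF assms this] show ?thesis .
qed

lemma exp_lin_bound:
  fixes t Y B :: real
  assumes YB: "\<bar>Y\<bar> \<le> B"
  shows "exp (t*Y) \<le> cosh (t*B) + Y * (sinh (t*B) / B)"
proof (cases "B = 0")
  case True
  then have "Y = 0" using YB by simp
  then show ?thesis using True by simp
next
  case False
  then have Bp: "B > 0" using YB by linarith
  define \<theta> where "\<theta> = (Y + B) / (2*B)"
  have th0: "\<theta> \<ge> 0" "\<theta> \<le> 1" using YB Bp by (auto simp: \<theta>_def field_simps)
  have tY: "t*Y = (1 - \<theta>) * (-(t*B)) + \<theta> * (t*B)"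
    using Bp by (simp add: \<theta>_def field_simps)
  have "exp (t*Y) = exp (1 * ((1 - \<theta>) *\<^sub>R (-(t*B)) + \<theta> *\<^sub>R (t*B)))" using tY by simp
  also have "\<dots> \<le> (1 - \<theta>) * exp (1 * (-(t*B))) + \<theta> * exp (1 * (t*B))"
    using convex_onD[OF convex_on_exp[of 1], of \<theta> "-(t*B)" "t*B"] th0 by simp
  also have "\<dots> = cosh (t*B) + Y * (sinh (t*B) / B)"
    using Bp by (simp add: \<theta>_def cosh_def sinh_def field_simps)
  finally show ?thesis .
qed

context L2setting
begin

lemma r_nonneg: "r \<ge> 0"
  using x0r norm_ge_zero order_trans by blast

lemma S_nonneg: "S \<ge> 0"
proof -
  interpret prob_space M by (rule M)
  obtain \<omega> where \<omega>: "\<omega> \<in> space M" using not_empty by blast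
  have "\<forall>j\<le>0. norm (X j \<omega> - xs) \<le> r" using X0[OF \<omega>] x0r by simp
  from \<zeta>_bdd[OF \<omega> this] show ?thesis by (meson norm_ge_zero order_trans)
qed

lemma L_nonneg: "L \<ge> 0"
proof -
  obtain i :: 'd where True by simp
  have "0 \<le> norm (gradF 0 - gradF (axis i 1))" by simp
  also have "\<dots> \<le> L * norm (0 - axis i (1::real))" by (rule smooth)
  finally show ?thesis by simp
qed

lemma subFS: "subalgebra (Sig k) (Fk k)"
  unfolding subalgebra_def Fk_def Sig_def gen_sigma_space gen_sigma_sets
  by (auto intro!: sigma_sets_mono sigma_sets.Basic)

lemma Fk_to_Sig: "f \<in> borel_measurable (Fk k) \<Longrightarrow> f \<in> borel_measurable (Sig k)"
  by (rule measurable_from_subalg[OF subFS])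

lemma Fk_to_M: "f \<in> borel_measurable (Fk k) \<Longrightarrow> f \<in> borel_measurable M"
  by (rule measurable_from_subalg[OF subF])

lemma zeta_step:
  assumes Hm: "H \<in> borel_measurable (Fk k)" and H0: "\<And>\<omega>. H \<omega> \<ge> 0" and Hint: "integrable M H"
    and Hgood: "\<And>\<omega>. \<omega> \<in> space M \<Longrightarrow> H \<omega> \<noteq> 0 \<Longrightarrow> good k \<omega>"
    and um: "u \<in> borel_measurable (Fk k)"
    and ur: "\<And>\<omega>. \<omega> \<in> space M \<Longrightarrow> H \<omega> \<noteq> 0 \<Longrightarrow> norm (u \<omega>) \<le> r"
  shows "(\<integral>\<^sup>+\<omega>. ennreal (H \<omega> * exp (t * (u \<omega> \<bullet> \<zeta> k \<omega>))) \<partial>M)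
         \<le> (\<integral>\<^sup>+\<omega>. ennreal (H \<omega> * cosh (t * (r*S))) \<partial>M)"
proof -
  interpret prob_space M by (rule M)
  have fms: "finite_measure_subalgebra M (Fk k)"
    by (intro finite_measure_subalgebra.intro finite_measure_subalgebra_axioms.intro subF)
       (rule finite_measureI, simp)
  interpret fs: finite_measure_subalgebra M "Fk k" by (rule fms)
  have HmM[measurable]: "H \<in> borel_measurable M" by (rule Fk_to_M[OF Hm])
  have umM[measurable]: "u \<in> borel_measurable M" by (rule Fk_to_M[OF um])
  note [measurable] = \<zeta>_meas
  define B where "B = r * S"
  define sc where "sc = sinh (t*B) / B"
  define Y where "Y = (\<lambda>\<omega>. u \<omega> \<bullet> \<zeta> k \<omega>)"
  have Ym[measurable]: "Y \<in> borel_measurable M" unfolding Y_def by measurable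
  have Ybd: "\<bar>Y \<omega>\<bar> \<le> B" if "\<omega> \<in> space M" "H \<omega> \<noteq> 0" for \<omega>
  proof -
    have g: "good k \<omega>" using Hgood that by simp
    have zs: "norm (\<zeta> k \<omega>) \<le> S" using \<zeta>_bdd[OF that(1)] g by (simp add: good_def)
    have "\<bar>Y \<omega>\<bar> \<le> norm (u \<omega>) * norm (\<zeta> k \<omega>)" unfolding Y_def by (rule Cauchy_Schwarz_ineq2)
    also have "\<dots> \<le> r * S" using ur[OF that] zs r_nonneg by (intro mult_mono) auto
    finally show ?thesis by (simp add: B_def)
  qed
  have compbd: "\<bar>H \<omega> * u \<omega> $ i * \<zeta> k \<omega> $ i\<bar> \<le> H \<omega> * B" if "\<omega> \<in> space M" for \<omega> i
  proof (cases "H \<omega> = 0")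
    case False
    have g: "good k \<omega>" using Hgood that False by simp
    have zs: "norm (\<zeta> k \<omega>) \<le> S" using \<zeta>_bdd[OF that(1)] g by (simp add: good_def)
    have "\<bar>u \<omega> $ i * \<zeta> k \<omega> $ i\<bar> \<le> norm (u \<omega>) * norm (\<zeta> k \<omega>)"
      unfolding abs_mult by (intro mult_mono component_le_norm_cart) auto
    also have "\<dots> \<le> B" using ur[OF that False] zs r_nonneg unfolding B_def by (intro mult_mono) auto
    finally have "H \<omega> * \<bar>u \<omega> $ i * \<zeta> k \<omega> $ i\<bar> \<le> H \<omega> * B" using H0 by (intro mult_left_mono) auto
    then show ?thesis using H0[of \<omega>] by (simp add: abs_mult mult.assoc)
  qed simp
  have int_i: "integrable M (\<lambda>\<omega>. (H \<omega> * u \<omega> $ i) * \<zeta> k \<omega> $ i)" for i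
  proof -
    have mi: "(\<lambda>\<omega>. (H \<omega> * u \<omega> $ i) * \<zeta> k \<omega> $ i) \<in> borel_measurable M" by measurable
    have B0: "B \<ge> 0" unfolding B_def using r_nonneg S_nonneg by simp
    have bd: "AE \<omega> in M. norm ((H \<omega> * u \<omega> $ i) * \<zeta> k \<omega> $ i) \<le> norm (H \<omega> * B)"
    proof (rule AE_I2)
      fix \<omega> assume "\<omega> \<in> space M"
      then have "\<bar>H \<omega> * u \<omega> $ i * \<zeta> k \<omega> $ i\<bar> \<le> H \<omega> * B" by (rule compbd)
      moreover have "H \<omega> * B \<ge> 0" using H0[of \<omega>] B0 by simp
      ultimately show "norm ((H \<omega> * u \<omega> $ i) * \<zeta> k \<omega> $ i) \<le> norm (H \<omega> * B)" by simp
    qed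
    show ?thesis by (rule Bochner_Integration.integrable_bound[OF integrable_mult_left[OF Hint] mi bd])
  qed
  have zero_i: "(\<integral>\<omega>. (H \<omega> * u \<omega> $ i) * \<zeta> k \<omega> $ i \<partial>M) = 0" for i
  proof -
    have m1: "(\<lambda>\<omega>. H \<omega> * u \<omega> $ i) \<in> borel_measurable (Fk k)" using Hm um by measurable
    have "(\<integral>\<omega>. (H \<omega> * u \<omega> $ i) * \<zeta> k \<omega> $ i \<partial>M)
        = (\<integral>\<omega>. (H \<omega> * u \<omega> $ i) * real_cond_exp M (Fk k) (\<lambda>\<omega>. \<zeta> k \<omega> $ i) \<omega> \<partial>M)"
      by (rule fs.real_cond_exp_intg(2)[symmetric]) (use int_i m1 in auto)
    also have "\<dots> = (\<integral>\<omega>. 0 \<partial>M)"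
      by (rule integral_cong_AE) (use \<zeta>_mean[of k i] in \<open>auto simp: Fk_def\<close>)
    finally show ?thesis by simp
  qed
  have HY: "(\<integral>\<omega>. H \<omega> * Y \<omega> \<partial>M) = 0"
  proof -
    have "(\<lambda>\<omega>. H \<omega> * Y \<omega>) = (\<lambda>\<omega>. \<Sum>i\<in>UNIV. (H \<omega> * u \<omega> $ i) * \<zeta> k \<omega> $ i)"
      unfolding Y_def inner_vec_def by (simp add: sum_distrib_left mult.assoc)
    then have "(\<integral>\<omega>. H \<omega> * Y \<omega> \<partial>M) = (\<Sum>i\<in>UNIV. (\<integral>\<omega>. (H \<omega> * u \<omega> $ i) * \<zeta> k \<omega> $ i \<partial>M))"
      using int_i by (simp add: integral_sum)
    then show ?thesis using zero_i by simp
  qed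
  have intHY: "integrable M (\<lambda>\<omega>. H \<omega> * Y \<omega>)"
  proof -
    have "(\<lambda>\<omega>. H \<omega> * Y \<omega>) = (\<lambda>\<omega>. \<Sum>i\<in>UNIV. (H \<omega> * u \<omega> $ i) * \<zeta> k \<omega> $ i)"
      unfolding Y_def inner_vec_def by (simp add: sum_distrib_left mult.assoc)
    then show ?thesis using int_i by simp
  qed
  define G where "G = (\<lambda>\<omega>. H \<omega> * cosh (t*B) + sc * (H \<omega> * Y \<omega>))"
  have intG: "integrable M G" unfolding G_def using Hint intHY by auto
  have ptw: "H \<omega> * exp (t * Y \<omega>) \<le> G \<omega>" if "\<omega> \<in> space M" for \<omega>
  proof (cases "H \<omega> = 0")
    case False
    have "exp (t * Y \<omega>) \<le> cosh (t*B) + Y \<omega> * sc" unfolding sc_def by (rule exp_lin_bound[OF Ybd[OF that False]])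
    then have "H \<omega> * exp (t * Y \<omega>) \<le> H \<omega> * (cosh (t*B) + Y \<omega> * sc)" using H0 by (intro mult_left_mono) auto
    then show ?thesis by (simp add: G_def algebra_simps)
  qed (simp add: G_def)
  have G0: "G \<omega> \<ge> 0" if "\<omega> \<in> space M" for \<omega>
    using ptw[OF that] H0[of \<omega>] by (smt (verit) exp_gt_zero mult_nonneg_nonneg)
  have "(\<integral>\<^sup>+\<omega>. ennreal (H \<omega> * exp (t * (u \<omega> \<bullet> \<zeta> k \<omega>))) \<partial>M) \<le> (\<integral>\<^sup>+\<omega>. ennreal (G \<omega>) \<partial>M)"
    by (rule nn_integral_mono) (use ptw in \<open>auto simp: Y_def intro!: ennreal_leI\<close>)
  also have "\<dots> = ennreal (\<integral>\<omega>. G \<omega> \<partial>M)"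
    by (rule nn_integral_eq_integral[OF intG]) (auto intro!: AE_I2 G0)
  also have "(\<integral>\<omega>. G \<omega> \<partial>M) = (\<integral>\<omega>. H \<omega> * cosh (t*B) \<partial>M)"
    unfolding G_def using Hint intHY HY by simp
  also have "ennreal \<dots> = (\<integral>\<^sup>+\<omega>. ennreal (H \<omega> * cosh (t * (r*S))) \<partial>M)"
  proof -
    have cp: "cosh (t*B) > 0" by (rule cosh_real_pos)
    have "(\<integral>\<^sup>+ \<omega>. ennreal (H \<omega> * cosh (t*B)) \<partial>M) = ennreal (\<integral>\<omega>. H \<omega> * cosh (t*B) \<partial>M)"
      by (rule nn_integral_eq_integral) (use cp H0 Hint in \<open>auto intro!: AE_I2 integrable_mult_left\<close>)
    then show ?thesis by (simp add: B_def)
  qed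
  finally show ?thesis .
qed

end

context L2setting
begin

definition "cc = 2 * \<eta> * S * r + 2 * sqrt \<eta> * C * (r + \<eta> * S + \<eta> * L * r) + \<eta> * C\<^sup>2"

lemma card_ge1: "real CARD('d) \<ge> 1"
proof -
  have "0 < CARD('d)" by (rule zero_less_card_finite)
  then show ?thesis by simp
qed

lemma C_facts: "C \<ge> 0" "C\<^sup>2 \<ge> 2 * real CARD('d)"
proof -
  have "sqrt (2 * real CARD('d)) \<ge> 0" by simp
  then show C0: "C \<ge> 0" using C\<xi> by linarith
  have "(sqrt (2 * real CARD('d)))\<^sup>2 \<le> C\<^sup>2" using C\<xi> by (intro power_mono) auto
  then show "C\<^sup>2 \<ge> 2 * real CARD('d)" by simp
qed

lemma cc_lb: assumes r0: "r \<ge> 0" shows "cc \<ge> 2 * sqrt \<eta> * C * r"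
proof -
  have "r \<le> r + \<eta> * S + \<eta> * L * r" using \<eta>_pos S_nonneg L_nonneg r0 by (simp add: mult_nonneg_nonneg)
  then have "2 * sqrt \<eta> * C * r \<le> 2 * sqrt \<eta> * C * (r + \<eta> * S + \<eta> * L * r)"
    using C_facts \<eta>_pos by (intro mult_left_mono) auto
  moreover have "2 * \<eta> * S * r \<ge> 0" "\<eta> * C\<^sup>2 \<ge> 0" using \<eta>_pos S_nonneg r0 by auto
  ultimately show ?thesis unfolding cc_def by linarith
qed

lemma lam_small:
  assumes r0: "r > 0" and lam0: "lam \<ge> 0" and lamc: "lam * cc\<^sup>2 \<le> r\<^sup>2"
  shows "2 * lam * \<eta> < 1"
proof -
  have "cc \<ge> 2 * sqrt \<eta> * C * r" using cc_lb r0 by simp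
  moreover have "2 * sqrt \<eta> * C * r \<ge> 0" using C_facts \<eta>_pos r0 by simp
  ultimately have "cc\<^sup>2 \<ge> (2 * sqrt \<eta> * C * r)\<^sup>2" by (intro power_mono) auto
  also have "(2 * sqrt \<eta> * C * r)\<^sup>2 = 4 * \<eta> * C\<^sup>2 * r\<^sup>2" using \<eta>_pos by (simp add: power_mult_distrib)
  finally have c1: "cc\<^sup>2 \<ge> 4 * \<eta> * C\<^sup>2 * r\<^sup>2" .
  have "C\<^sup>2 \<ge> 2" using C_facts(2) card_ge1 by linarith
  then have "4 * \<eta> * C\<^sup>2 * r\<^sup>2 \<ge> 4 * \<eta> * 2 * r\<^sup>2" using \<eta>_pos by (intro mult_right_mono mult_left_mono) auto
  with c1 have "lam * cc\<^sup>2 \<ge> lam * (8 * \<eta> * r\<^sup>2)" using lam0 by (intro mult_left_mono) auto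
  with lamc have "lam * (8 * \<eta> * r\<^sup>2) \<le> r\<^sup>2" by linarith
  then have "(8 * lam * \<eta>) * r\<^sup>2 \<le> 1 * r\<^sup>2" by (simp add: algebra_simps)
  then have "8 * lam * \<eta> \<le> 1" using r0 by (simp add: mult_le_cancel_right)
  then show ?thesis by linarith
qed

lemma Xsucc: "\<omega> \<in> space M \<Longrightarrow> X (Suc k) \<omega> - xs = uu k \<omega> - \<eta> *\<^sub>R \<zeta> k \<omega> + sqrt \<eta> *\<^sub>R \<xi> k \<omega>"
  using Xrec[of \<omega> k] by (simp add: uu_def algebra_simps)

lemma mgf_step:
  assumes hm: "h \<in> borel_measurable (Fk k)" and h0: "\<And>\<omega>. h \<omega> \<ge> 0"
    and hfin: "(\<integral>\<^sup>+\<omega>. ennreal (h \<omega>) \<partial>M) < \<infinity>"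
    and lam0: "lam \<ge> 0" and lamc: "lam * cc\<^sup>2 \<le> r\<^sup>2"
    and r0: "r > 0" and etaL: "\<eta> * L \<le> 1" and rd: "\<eta> * real CARD('d) \<le> r\<^sup>2"
  shows "(\<integral>\<^sup>+\<omega>. ennreal (h \<omega> * (if good k \<omega> then exp (lam * V k \<omega>) else 0)) \<partial>M)
       \<le> ennreal (exp (lam\<^sup>2 * cc\<^sup>2 / 2)) * (\<integral>\<^sup>+\<omega>. ennreal (h \<omega> * (if good k \<omega> then 1 else 0)) \<partial>M)"
proof -
  interpret prob_space M by (rule M)
  define \<beta> where "\<beta> = 1 - 2 * lam * \<eta>"
  have bpos: "\<beta> > 0" using lam_small[OF r0 lam0 lamc] by (simp add: \<beta>_def)
  define dd where "dd = real CARD('d)"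
  define e where "e = (\<lambda>\<omega>. X k \<omega> - xs)"
  define H where "H = (\<lambda>\<omega>. h \<omega> * (if good k \<omega> then exp (- lam * ((norm (e \<omega>))\<^sup>2 + D0)) else 0))"
  define w where "w = (\<lambda>\<omega>. uu k \<omega> - \<eta> *\<^sub>R \<zeta> k \<omega>)"
  define t where "t = - (2 * lam * \<eta> / \<beta>)"
  define H2 where "H2 = (\<lambda>\<omega>. H \<omega> * (\<beta> powr (- dd / 2) * exp (lam * ((norm (uu k \<omega>))\<^sup>2 + \<eta>\<^sup>2 * S\<^sup>2) / \<beta>)))"
  have XF: "\<And>j. j \<le> k \<Longrightarrow> X j \<in> borel_measurable (Fk k)" by (rule Fk_X)
  have XS: "\<And>j. j \<le> k \<Longrightarrow> X j \<in> borel_measurable (Sig k)" by (rule Sig_X)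
  note mF = meas_generic[OF XF] and mS = meas_generic[OF XS]
  have [measurable]: "Measurable.pred (Fk k) (good k)" "uu k \<in> borel_measurable (Fk k)"
    "X k \<in> borel_measurable (Fk k)" "h \<in> borel_measurable (Fk k)"
    using mF(1)[of k] mF(5) XF[of k] hm by auto
  have HF[measurable]: "H \<in> borel_measurable (Fk k)" unfolding H_def e_def by measurable
  have H2F[measurable]: "H2 \<in> borel_measurable (Fk k)" unfolding H2_def by measurable
  have HS[measurable]: "H \<in> borel_measurable (Sig k)" by (rule Fk_to_Sig[OF HF])
  have [measurable]: "uu k \<in> borel_measurable (Sig k)" "\<zeta> k \<in> borel_measurable (Sig k)"
    using mS(5) Sig_zeta by auto
  have wS[measurable]: "w \<in> borel_measurable (Sig k)" unfolding w_def by measurable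
  have H0: "H \<omega> \<ge> 0" for \<omega> unfolding H_def using h0[of \<omega>] by simp
  have uu_le: "norm (uu k \<omega>) \<le> norm (e \<omega>)" for \<omega>
    unfolding uu_def e_def
    by (rule grad_step_nonexpansive[OF convF gradF smooth minim \<eta>_pos etaL])
  have s1: "(\<integral>\<^sup>+\<omega>. ennreal (h \<omega> * (if good k \<omega> then exp (lam * V k \<omega>) else 0)) \<partial>M)
      = (\<integral>\<^sup>+\<omega>. ennreal (H \<omega> * exp (lam * (norm (w \<omega> + sqrt \<eta> *\<^sub>R \<xi> k \<omega>))\<^sup>2)) \<partial>M)"
  proof (rule nn_integral_cong)
    fix \<omega> assume \<omega>: "\<omega> \<in> space M"
    have Veq: "V k \<omega> = (norm (w \<omega> + sqrt \<eta> *\<^sub>R \<xi> k \<omega>))\<^sup>2 - ((norm (e \<omega>))\<^sup>2 + D0)"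
      unfolding V_def e_def w_def Xsucc[OF \<omega>] by simp
    have lv: "lam * V k \<omega> = - lam * ((norm (e \<omega>))\<^sup>2 + D0) + lam * (norm (w \<omega> + sqrt \<eta> *\<^sub>R \<xi> k \<omega>))\<^sup>2"
      unfolding Veq by (simp add: algebra_simps)
    have "exp (lam * V k \<omega>) = exp (- lam * ((norm (e \<omega>))\<^sup>2 + D0)) * exp (lam * (norm (w \<omega> + sqrt \<eta> *\<^sub>R \<xi> k \<omega>))\<^sup>2)"
      unfolding lv by (rule exp_add)
    then show "ennreal (h \<omega> * (if good k \<omega> then exp (lam * V k \<omega>) else 0))
        = ennreal (H \<omega> * exp (lam * (norm (w \<omega> + sqrt \<eta> *\<^sub>R \<xi> k \<omega>))\<^sup>2))"
      by (simp add: H_def mult.assoc)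
  qed
  have s2: "(\<integral>\<^sup>+\<omega>. ennreal (H \<omega> * exp (lam * (norm (w \<omega> + sqrt \<eta> *\<^sub>R \<xi> k \<omega>))\<^sup>2)) \<partial>M)
      = (\<integral>\<^sup>+\<omega>. ennreal (H \<omega> * (\<beta> powr (- dd / 2) * exp (lam * (norm (w \<omega>))\<^sup>2 / \<beta>))) \<partial>M)"
  proof -
    define \<Phi> where "\<Phi> = (\<lambda>z::'a \<times> (real^'d). ennreal (H (fst z) * exp (lam * (norm (w (fst z) + sqrt \<eta> *\<^sub>R snd z))\<^sup>2)))"
    have Phim: "\<Phi> \<in> borel_measurable (Sig k \<Otimes>\<^sub>M lborel)" unfolding \<Phi>_def by measurable
    have "(\<integral>\<^sup>+\<omega>. ennreal (H \<omega> * exp (lam * (norm (w \<omega> + sqrt \<eta> *\<^sub>R \<xi> k \<omega>))\<^sup>2)) \<partial>M)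
        = (\<integral>\<^sup>+\<omega>. \<Phi> (\<omega>, \<xi> k \<omega>) \<partial>M)" by (simp add: \<Phi>_def)
    also have "\<dots> = (\<integral>\<^sup>+\<omega>. (\<integral>\<^sup>+y. \<Phi> (\<omega>, y) \<partial>(distr M lborel (\<xi> k))) \<partial>M)"
      by (rule indep_fubini[OF Phim])
    also have "\<dots> = (\<integral>\<^sup>+\<omega>. ennreal (H \<omega> * (\<beta> powr (- dd / 2) * exp (lam * (norm (w \<omega>))\<^sup>2 / \<beta>))) \<partial>M)"
    proof (rule nn_integral_cong)
      fix \<omega>
      have "(\<integral>\<^sup>+y. \<Phi> (\<omega>, y) \<partial>(distr M lborel (\<xi> k)))
          = (\<integral>\<^sup>+y. ennreal (H \<omega>) * ennreal (exp (lam * (norm (w \<omega> + sqrt \<eta> *\<^sub>R y))\<^sup>2)) \<partial>(distr M lborel (\<xi> k)))"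
        unfolding \<Phi>_def using H0[of \<omega>] by (simp add: ennreal_mult)
      also have "\<dots> = ennreal (H \<omega>) * (\<integral>\<^sup>+y. ennreal (exp (lam * (norm (w \<omega> + sqrt \<eta> *\<^sub>R y))\<^sup>2)) \<partial>(distr M lborel (\<xi> k)))"
        by (rule nn_integral_cmult) (use \<xi>_meas in simp)
      also have "\<dots> = ennreal (H \<omega>) * ennreal ((1 - 2*lam*\<eta>) powr (- real CARD('d)/2) * exp (lam * (norm (w \<omega>))\<^sup>2 / (1 - 2*lam*\<eta>)))"
        using gauss_mgf[OF M \<xi>_gauss lam0 \<eta>_pos lam_small[OF r0 lam0 lamc]] by simp
      also have "\<dots> = ennreal (H \<omega> * (\<beta> powr (- dd / 2) * exp (lam * (norm (w \<omega>))\<^sup>2 / \<beta>)))"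
        using H0[of \<omega>] by (simp add: ennreal_mult \<beta>_def dd_def)
      finally show "(\<integral>\<^sup>+y. \<Phi> (\<omega>, y) \<partial>(distr M lborel (\<xi> k))) = ennreal (H \<omega> * (\<beta> powr (- dd / 2) * exp (lam * (norm (w \<omega>))\<^sup>2 / \<beta>)))" .
    qed
    finally show ?thesis .
  qed
  have s3: "(\<integral>\<^sup>+\<omega>. ennreal (H \<omega> * (\<beta> powr (- dd / 2) * exp (lam * (norm (w \<omega>))\<^sup>2 / \<beta>))) \<partial>M)
      \<le> (\<integral>\<^sup>+\<omega>. ennreal (H2 \<omega> * exp (t * (uu k \<omega> \<bullet> \<zeta> k \<omega>))) \<partial>M)"
  proof (rule nn_integral_mono)
    fix \<omega> assume \<omega>: "\<omega> \<in> space M"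
    show "ennreal (H \<omega> * (\<beta> powr (- dd / 2) * exp (lam * (norm (w \<omega>))\<^sup>2 / \<beta>)))
        \<le> ennreal (H2 \<omega> * exp (t * (uu k \<omega> \<bullet> \<zeta> k \<omega>)))"
    proof (cases "good k \<omega>")
      case False then show ?thesis by (simp add: H_def H2_def)
    next
      case True
      have zs: "norm (\<zeta> k \<omega>) \<le> S" using \<zeta>_bdd[OF \<omega>] True by (simp add: good_def)
      have "(norm (\<zeta> k \<omega>))\<^sup>2 \<le> S\<^sup>2" using zs by (intro power_mono) auto
      have "(norm (w \<omega>))\<^sup>2 = (norm (uu k \<omega>))\<^sup>2 - 2 * \<eta> * (uu k \<omega> \<bullet> \<zeta> k \<omega>) + \<eta>\<^sup>2 * (norm (\<zeta> k \<omega>))\<^sup>2"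
        unfolding w_def power2_norm_eq_inner
        by (simp add: inner_diff_left inner_diff_right inner_commute algebra_simps power2_eq_square)
      also have "\<dots> \<le> (norm (uu k \<omega>))\<^sup>2 + \<eta>\<^sup>2 * S\<^sup>2 - 2 * \<eta> * (uu k \<omega> \<bullet> \<zeta> k \<omega>)"
        using \<open>(norm (\<zeta> k \<omega>))\<^sup>2 \<le> S\<^sup>2\<close> \<eta>_pos by (simp add: mult_left_mono)
      finally have wle: "(norm (w \<omega>))\<^sup>2 \<le> (norm (uu k \<omega>))\<^sup>2 + \<eta>\<^sup>2 * S\<^sup>2 - 2 * \<eta> * (uu k \<omega> \<bullet> \<zeta> k \<omega>)" .
      have "lam * (norm (w \<omega>))\<^sup>2 / \<beta> \<le> lam * ((norm (uu k \<omega>))\<^sup>2 + \<eta>\<^sup>2 * S\<^sup>2 - 2 * \<eta> * (uu k \<omega> \<bullet> \<zeta> k \<omega>)) / \<beta>"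
        using wle lam0 bpos by (intro divide_right_mono mult_left_mono) auto
      also have "\<dots> = lam * ((norm (uu k \<omega>))\<^sup>2 + \<eta>\<^sup>2 * S\<^sup>2) / \<beta> + t * (uu k \<omega> \<bullet> \<zeta> k \<omega>)"
        unfolding t_def using bpos by (simp add: field_simps)
      finally have "exp (lam * (norm (w \<omega>))\<^sup>2 / \<beta>) \<le> exp (lam * ((norm (uu k \<omega>))\<^sup>2 + \<eta>\<^sup>2 * S\<^sup>2) / \<beta>) * exp (t * (uu k \<omega> \<bullet> \<zeta> k \<omega>))"
        by (simp add: exp_add[symmetric])
      then have "H \<omega> * (\<beta> powr (- dd / 2) * exp (lam * (norm (w \<omega>))\<^sup>2 / \<beta>))
          \<le> H \<omega> * (\<beta> powr (- dd / 2) * (exp (lam * ((norm (uu k \<omega>))\<^sup>2 + \<eta>\<^sup>2 * S\<^sup>2) / \<beta>) * exp (t * (uu k \<omega> \<bullet> \<zeta> k \<omega>))))"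
        using H0[of \<omega>] by (intro mult_left_mono) auto
      then show ?thesis by (intro ennreal_leI) (simp add: H2_def mult_ac)
    qed
  qed
  have hint: "integrable M h"
  proof -
    obtain x where "(\<integral>\<^sup>+\<omega>. ennreal (h \<omega>) \<partial>M) = ennreal x" using hfin by (cases "(\<integral>\<^sup>+\<omega>. ennreal (h \<omega>) \<partial>M)") auto
    then show ?thesis by (intro integrableI_nn_integral_finite[where x=x]) (auto intro: Fk_to_M[OF hm] h0)
  qed
  define K0 where "K0 = \<beta> powr (- dd / 2) * exp (lam * (r\<^sup>2 + \<eta>\<^sup>2 * S\<^sup>2) / \<beta>)"
  have H2bd: "H2 \<omega> \<le> h \<omega> * K0" for \<omega>
  proof (cases "good k \<omega>")
    case True
    have er: "norm (e \<omega>) \<le> r" using True by (simp add: good_def e_def)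
    have ur: "norm (uu k \<omega>) \<le> r" using uu_le[of \<omega>] er by simp
    have "(norm (uu k \<omega>))\<^sup>2 \<le> r\<^sup>2" using ur by (intro power_mono) auto
    then have a: "exp (lam * ((norm (uu k \<omega>))\<^sup>2 + \<eta>\<^sup>2 * S\<^sup>2) / \<beta>) \<le> exp (lam * (r\<^sup>2 + \<eta>\<^sup>2 * S\<^sup>2) / \<beta>)"
      using lam0 bpos by (auto intro!: divide_right_mono mult_left_mono)
    have b: "exp (- lam * ((norm (e \<omega>))\<^sup>2 + D0)) \<le> 1"
    proof -
      have "D0 \<ge> 0" unfolding D0_def using \<eta>_pos by simp
      then show ?thesis using lam0 by (simp add: mult_nonneg_nonneg)
    qed
    have "H2 \<omega> = h \<omega> * exp (- lam * ((norm (e \<omega>))\<^sup>2 + D0)) * (\<beta> powr (- dd / 2) * exp (lam * ((norm (uu k \<omega>))\<^sup>2 + \<eta>\<^sup>2 * S\<^sup>2) / \<beta>))"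
      using True by (simp add: H2_def H_def)
    also have "\<dots> \<le> h \<omega> * 1 * (\<beta> powr (- dd / 2) * exp (lam * (r\<^sup>2 + \<eta>\<^sup>2 * S\<^sup>2) / \<beta>))"
      using a b h0[of \<omega>] by (intro mult_mono) auto
    finally show ?thesis by (simp add: K0_def)
  next
    case False then show ?thesis using h0[of \<omega>] by (simp add: H2_def H_def K0_def)
  qed
  have K00: "K0 \<ge> 0" unfolding K0_def by simp
  have hK0: "\<bar>h \<omega> * K0\<bar> = h \<omega> * K0" for \<omega> using h0[of \<omega>] K00 by simp
  have H20: "H2 \<omega> \<ge> 0" for \<omega> unfolding H2_def using H0[of \<omega>] by simp
  have H2int: "integrable M H2"
    by (rule Bochner_Integration.integrable_bound[where f="\<lambda>\<omega>. h \<omega> * K0"])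
       (auto intro!: integrable_mult_left hint AE_I2 Fk_to_M[OF H2F] simp: H2bd H20 hK0)
  have s4: "(\<integral>\<^sup>+\<omega>. ennreal (H2 \<omega> * exp (t * (uu k \<omega> \<bullet> \<zeta> k \<omega>))) \<partial>M)
      \<le> (\<integral>\<^sup>+\<omega>. ennreal (H2 \<omega> * cosh (t * (r*S))) \<partial>M)"
  proof (rule zeta_step[OF H2F H20 H2int _ mF(5)])
    fix \<omega> assume "\<omega> \<in> space M" "H2 \<omega> \<noteq> 0"
    then show "good k \<omega>" by (auto simp: H2_def H_def split: if_splits)
    then have "norm (X k \<omega> - xs) \<le> r" by (simp add: good_def)
    then show "norm (uu k \<omega>) \<le> r" using uu_le[of \<omega>] unfolding e_def by linarith
  qed
  have s5: "(\<integral>\<^sup>+\<omega>. ennreal (H2 \<omega> * cosh (t * (r*S))) \<partial>M)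
      \<le> (\<integral>\<^sup>+\<omega>. ennreal (exp (lam\<^sup>2 * cc\<^sup>2 / 2)) * ennreal (h \<omega> * (if good k \<omega> then 1 else 0)) \<partial>M)"
  proof (rule nn_integral_mono)
    fix \<omega> assume \<omega>: "\<omega> \<in> space M"
    show "ennreal (H2 \<omega> * cosh (t * (r*S))) \<le> ennreal (exp (lam\<^sup>2 * cc\<^sup>2 / 2)) * ennreal (h \<omega> * (if good k \<omega> then 1 else 0))"
    proof (cases "good k \<omega>")
      case False then show ?thesis by (simp add: H2_def H_def)
    next
      case True
      have er: "norm (e \<omega>) \<le> r" using True by (simp add: good_def e_def)
      have key: "(1 - 2*lam*\<eta>) powr (-dd/2) * exp (lam*((norm (uu k \<omega>))\<^sup>2 + \<eta>\<^sup>2*S\<^sup>2)/(1-2*lam*\<eta>) - lam*((norm (e \<omega>))\<^sup>2 + D0))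
           * cosh (2*lam*\<eta>*r*S/(1-2*lam*\<eta>)) \<le> exp (lam\<^sup>2*cc\<^sup>2/2)"
      proof (rule main_real[OF \<eta>_pos r0 S_nonneg L_nonneg _ C_facts(1) _ lam0 lamc])
        show "D0 = 2*\<eta>\<^sup>2*(S\<^sup>2+L\<^sup>2*r\<^sup>2) + \<eta>*dd" by (simp add: D0_def dd_def)
        show "cc = 2*\<eta>*S*r + 2 * sqrt \<eta>*C*(r + \<eta>*S + \<eta>*L*r) + \<eta>*C\<^sup>2" by (simp add: cc_def)
        show "dd \<ge> 1" unfolding dd_def by (rule card_ge1)
        show "C\<^sup>2 \<ge> 2 * dd" using C_facts(2) by (simp add: dd_def)
        show "\<eta> * dd \<le> r\<^sup>2" using rd by (simp add: dd_def)
        show "0 \<le> (norm (uu k \<omega>))\<^sup>2" by simp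
        show "(norm (uu k \<omega>))\<^sup>2 \<le> (norm (e \<omega>))\<^sup>2" using uu_le[of \<omega>] by (intro power_mono) auto
        show "(norm (e \<omega>))\<^sup>2 \<le> r\<^sup>2" using er by (intro power_mono) auto
      qed
      have ct: "cosh (t * (r*S)) = cosh (2*lam*\<eta>*r*S/(1-2*lam*\<eta>))"
      proof -
        have "t * (r*S) = - (2*lam*\<eta>*r*S/(1-2*lam*\<eta>))" unfolding t_def \<beta>_def by (simp add: field_simps)
        then show ?thesis by (simp add: cosh_minus)
      qed
      have "H2 \<omega> * cosh (t * (r*S)) = h \<omega> * ((1 - 2*lam*\<eta>) powr (-dd/2) * exp (lam*((norm (uu k \<omega>))\<^sup>2 + \<eta>\<^sup>2*S\<^sup>2)/(1-2*lam*\<eta>) - lam*((norm (e \<omega>))\<^sup>2 + D0))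
           * cosh (2*lam*\<eta>*r*S/(1-2*lam*\<eta>)))"
        unfolding ct using True by (simp add: H2_def H_def \<beta>_def exp_diff exp_minus exp_add field_simps)
      also have "\<dots> \<le> h \<omega> * exp (lam\<^sup>2*cc\<^sup>2/2)" using key h0[of \<omega>] by (intro mult_left_mono) auto
      finally show ?thesis using True h0[of \<omega>] by (simp add: ennreal_mult'[symmetric] mult.commute)
    qed
  qed
  also have "\<dots> = ennreal (exp (lam\<^sup>2 * cc\<^sup>2 / 2)) * (\<integral>\<^sup>+\<omega>. ennreal (h \<omega> * (if good k \<omega> then 1 else 0)) \<partial>M)"
    by (rule nn_integral_cmult) (rule Fk_to_M[where k=k], measurable)
  finally have s5': "(\<integral>\<^sup>+\<omega>. ennreal (H2 \<omega> * cosh (t * (r*S))) \<partial>M) \<le> ennreal (exp (lam\<^sup>2 * cc\<^sup>2 / 2)) * (\<integral>\<^sup>+\<omega>. ennreal (h \<omega> * (if good k \<omega> then 1 else 0)) \<partial>M)" .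
  show ?thesis unfolding s1 s2 using order_trans[OF s3 order_trans[OF s4 s5']] .
qed

end

context L2setting
begin

lemma chain:
  assumes lam0: "lam \<ge> 0" and lamc: "lam * cc\<^sup>2 \<le> r\<^sup>2"
    and r0: "r > 0" and etaL: "\<eta> * L \<le> 1" and rd: "\<eta> * real CARD('d) \<le> r\<^sup>2"
  shows "(\<integral>\<^sup>+\<omega>. ennreal (exp (lam * Ssum k \<omega>)) \<partial>M) \<le> ennreal (exp (real k * (lam\<^sup>2 * cc\<^sup>2 / 2)))"
proof (induction k)
  case 0
  interpret prob_space M by (rule M)
  show ?case by (simp add: Ssum_def emeasure_space_1)
next
  case (Suc k)
  interpret prob_space M by (rule M)
  define E where "E = exp (lam\<^sup>2 * cc\<^sup>2 / 2)"
  define h where "h = (\<lambda>\<omega>. exp (lam * Ssum k \<omega>))"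
  have XF: "\<And>j. j \<le> k \<Longrightarrow> X j \<in> borel_measurable (Fk k)" by (rule Fk_X)
  have [measurable]: "Ssum k \<in> borel_measurable (Fk k)" by (rule meas_generic(4)[OF XF])
  have hm: "h \<in> borel_measurable (Fk k)" unfolding h_def by measurable
  have hM[measurable]: "h \<in> borel_measurable M" by (rule Fk_to_M[OF hm])
  have gM[measurable]: "Measurable.pred M (good k)" by (rule meas_generic(1)[OF X_meas, of k k]) simp
  have VM[measurable]: "V k \<in> borel_measurable M" unfolding V_def by measurable
  have h0: "\<And>\<omega>. h \<omega> \<ge> 0" by (simp add: h_def)
  have hfin: "(\<integral>\<^sup>+\<omega>. ennreal (h \<omega>) \<partial>M) < \<infinity>"
    using Suc.IH unfolding h_def by (rule le_less_trans) simp
  have sp: "ennreal (exp (lam * Ssum (Suc k) \<omega>)) = ennreal (h \<omega> * (if good k \<omega> then exp (lam * V k \<omega>) else 0)) + ennreal (h \<omega> * (if good k \<omega> then 0 else 1))" for \<omega>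
    by (cases "good k \<omega>") (simp_all add: Ssum_def W_def h_def exp_add distrib_left)
  have sp2: "ennreal (h \<omega>) = ennreal (h \<omega> * (if good k \<omega> then 1 else 0)) + ennreal (h \<omega> * (if good k \<omega> then 0 else 1))" for \<omega>
    by (cases "good k \<omega>") simp_all
  have E1: "ennreal E \<ge> 1" unfolding E_def by simp
  have "(\<integral>\<^sup>+\<omega>. ennreal (exp (lam * Ssum (Suc k) \<omega>)) \<partial>M)
      = (\<integral>\<^sup>+\<omega>. ennreal (h \<omega> * (if good k \<omega> then exp (lam * V k \<omega>) else 0)) \<partial>M) + (\<integral>\<^sup>+\<omega>. ennreal (h \<omega> * (if good k \<omega> then 0 else 1)) \<partial>M)"
    unfolding sp by (rule nn_integral_add) measurable
  also have "\<dots> \<le> ennreal E * (\<integral>\<^sup>+\<omega>. ennreal (h \<omega> * (if good k \<omega> then 1 else 0)) \<partial>M) + ennreal E * (\<integral>\<^sup>+\<omega>. ennreal (h \<omega> * (if good k \<omega> then 0 else 1)) \<partial>M)"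
  proof (rule add_mono)
    show "(\<integral>\<^sup>+\<omega>. ennreal (h \<omega> * (if good k \<omega> then exp (lam * V k \<omega>) else 0)) \<partial>M) \<le> ennreal E * (\<integral>\<^sup>+\<omega>. ennreal (h \<omega> * (if good k \<omega> then 1 else 0)) \<partial>M)"
      unfolding E_def by (rule mgf_step[OF hm h0 hfin lam0 lamc r0 etaL rd])
    have "1 * (\<integral>\<^sup>+\<omega>. ennreal (h \<omega> * (if good k \<omega> then 0 else 1)) \<partial>M) \<le> ennreal E * (\<integral>\<^sup>+\<omega>. ennreal (h \<omega> * (if good k \<omega> then 0 else 1)) \<partial>M)"
      using E1 by (rule mult_right_mono) simp
    then show "(\<integral>\<^sup>+\<omega>. ennreal (h \<omega> * (if good k \<omega> then 0 else 1)) \<partial>M) \<le> ennreal E * (\<integral>\<^sup>+\<omega>. ennreal (h \<omega> * (if good k \<omega> then 0 else 1)) \<partial>M)" by simp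
  qed
  also have "\<dots> = ennreal E * (\<integral>\<^sup>+\<omega>. ennreal (h \<omega>) \<partial>M)"
  proof -
    have "(\<integral>\<^sup>+\<omega>. ennreal (h \<omega>) \<partial>M) = (\<integral>\<^sup>+\<omega>. ennreal (h \<omega> * (if good k \<omega> then 1 else 0)) \<partial>M) + (\<integral>\<^sup>+\<omega>. ennreal (h \<omega> * (if good k \<omega> then 0 else 1)) \<partial>M)"
      unfolding sp2 by (rule nn_integral_add) measurable
    then show ?thesis by (simp add: distrib_left)
  qed
  also have "\<dots> \<le> ennreal E * ennreal (exp (real k * (lam\<^sup>2 * cc\<^sup>2 / 2)))"
    using Suc.IH unfolding h_def by (rule mult_left_mono) simp
  also have "\<dots> = ennreal (exp (real (Suc k) * (lam\<^sup>2 * cc\<^sup>2 / 2)))"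
    unfolding E_def by (simp add: ennreal_mult'[symmetric] exp_add[symmetric] algebra_simps)
  finally show ?case .
qed

lemma telescope: "(\<Sum>i<k. V i \<omega>) = (norm (X k \<omega> - xs))\<^sup>2 - (norm (X 0 \<omega> - xs))\<^sup>2 - real k * D0"
  by (induction k) (simp_all add: V_def algebra_simps)

lemma exit_time:
  assumes \<omega>: "\<omega> \<in> space M" and bad: "\<not> (\<forall>j\<in>{1..imax}. norm (X j \<omega> - xs) \<le> r)" and r0: "r > 0"
  shows "\<exists>k\<in>{1..imax}. Ssum k \<omega> > r\<^sup>2 - (norm (x0 - xs))\<^sup>2 - real imax * D0"
proof -
  define P where "P j = (norm (X j \<omega> - xs) > r)" for j
  from bad obtain j0 where j0: "j0 \<in> {1..imax}" "P j0" by (auto simp: P_def not_le)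
  define k where "k = (LEAST j. P j)"
  have Pk: "P k" unfolding k_def by (rule LeastI[of P j0]) (rule j0(2))
  have kle: "k \<le> j0" unfolding k_def by (rule Least_le) (rule j0(2))
  have notP: "\<not> P i" if "i < k" for i using that unfolding k_def by (rule not_less_Least)
  have k0: "k \<noteq> 0"
  proof
    assume "k = 0"
    then have "P 0" using Pk by simp
    then show False using X0[OF \<omega>] x0r by (simp add: P_def)
  qed
  have goodi: "good i \<omega>" if "i < k" for i
    unfolding good_def using notP that by (auto simp: P_def not_less)
  have "Ssum k \<omega> = (\<Sum>i<k. V i \<omega>)" unfolding Ssum_def W_def by (rule sum.cong) (auto simp: goodi)
  also have "\<dots> = (norm (X k \<omega> - xs))\<^sup>2 - (norm (x0 - xs))\<^sup>2 - real k * D0"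
    using telescope[where k=k and \<omega>=\<omega>] X0[OF \<omega>] by simp
  finally have Sk: "Ssum k \<omega> = (norm (X k \<omega> - xs))\<^sup>2 - (norm (x0 - xs))\<^sup>2 - real k * D0" .
  have "r\<^sup>2 < (norm (X k \<omega> - xs))\<^sup>2" using Pk r0 unfolding P_def by (intro power_strict_mono) auto
  moreover have "real k * D0 \<le> real imax * D0"
  proof -
    have "D0 \<ge> 0" unfolding D0_def using \<eta>_pos by simp
    moreover have "real k \<le> real imax" using kle j0(1) by simp
    ultimately show ?thesis by (intro mult_right_mono) auto
  qed
  ultimately have "Ssum k \<omega> > r\<^sup>2 - (norm (x0 - xs))\<^sup>2 - real imax * D0" using Sk by linarith
  moreover have "k \<in> {1..imax}" using k0 kle j0(1) by auto
  ultimately show ?thesis by blast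
qed

end

context L2setting
begin

lemma main_bound:
  shows "measure M (space M - {\<omega> \<in> space M. \<forall>j\<in>{1..imax}. norm (X j \<omega> - xs) \<le> r})
         \<le> real imax *
            (exp (- ((r\<^sup>2 - (norm (x0 - xs))\<^sup>2
                       - real imax * (2 * \<eta>\<^sup>2 * (S\<^sup>2 + L\<^sup>2 * r\<^sup>2) + \<eta> * real CARD('d)))\<^sup>2
                     / (2 * real imax * (2 * \<eta> * S * r
                          + 2 * sqrt \<eta> * C * (r + \<eta> * S + \<eta> * L * r) + \<eta> * C\<^sup>2)\<^sup>2)))
             + exp (- (C\<^sup>2 - real CARD('d)) / 8))"
proof (cases "imax = 0")
  case True
  then show ?thesis by simp
next
  case False
  interpret prob_space M by (rule M)
  define n where "n = real imax"
  have n1: "n \<ge> 1" using False by (simp add: n_def)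
  define \<delta> where "\<delta> = r\<^sup>2 - (norm (x0 - xs))\<^sup>2 - n * D0"
  have D00: "D0 \<ge> 0" unfolding D0_def using \<eta>_pos by simp
  have d1: "real CARD('d) \<ge> 1" by (rule card_ge1)
  have rb: "r\<^sup>2 > (norm (x0 - xs))\<^sup>2 + n * D0" using rbig by (simp add: n_def D0_def)
  have dpos: "\<delta> > 0" using rb by (simp add: \<delta>_def)
  have nD: "n * D0 \<ge> D0" using n1 D00 by (simp add: mult_right_mono[of 1 n D0, simplified])
  have rd: "\<eta> * real CARD('d) \<le> r\<^sup>2"
  proof -
    have "\<eta> * real CARD('d) \<le> D0" unfolding D0_def using \<eta>_pos by simp
    then show ?thesis using rb nD zero_le_power2[of "norm (x0 - xs)"] by linarith
  qed
  have r0: "r > 0"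
  proof -
    have "\<eta> * real CARD('d) > 0" using \<eta>_pos d1 by simp
    then have "r\<^sup>2 > 0" using rd by linarith
    then have "r \<noteq> 0" by auto
    then show ?thesis using r_nonneg by simp
  qed
  have etaL: "\<eta> * L \<le> 1"
  proof (rule ccontr)
    assume "\<not> \<eta> * L \<le> 1"
    then have g: "\<eta> * L > 1" by simp
    have "(\<eta> * L)\<^sup>2 > 1" by (rule one_less_power[OF g]) simp
    then have "2 * \<eta>\<^sup>2 * L\<^sup>2 * r\<^sup>2 \<ge> r\<^sup>2"
      using r0 by (simp add: power_mult_distrib)
    moreover have "D0 \<ge> 2 * \<eta>\<^sup>2 * L\<^sup>2 * r\<^sup>2" unfolding D0_def using \<eta>_pos
      by (simp add: algebra_simps)
    ultimately show False using rb nD zero_le_power2[of "norm (x0 - xs)"] by linarith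
  qed
  have ccpos: "cc > 0"
  proof -
    have "C \<noteq> 0"
    proof
      assume "C = 0"
      then show False using C_facts(2) d1 by simp
    qed
    then have "C > 0" using C_facts(1) by simp
    then have "2 * sqrt \<eta> * C * r > 0" using \<eta>_pos r0 by simp
    then show ?thesis using cc_lb[of] r0 by linarith
  qed
  define lam where "lam = \<delta> / (n * cc\<^sup>2)"
  have lam0: "lam \<ge> 0" using dpos n1 ccpos by (simp add: lam_def)
  have lamc: "lam * cc\<^sup>2 \<le> r\<^sup>2"
  proof -
    have "lam * cc\<^sup>2 = \<delta> / n" using ccpos n1 by (simp add: lam_def)
    also have "\<dots> \<le> \<delta>" using dpos n1 by (simp add: divide_le_eq)
    also have "\<dots> \<le> r\<^sup>2"
    proof -
      have "n * D0 \<ge> 0" using n1 D00 by simp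
      then show ?thesis unfolding \<delta>_def using zero_le_power2[of "norm (x0 - xs)"] by linarith
    qed
    finally show ?thesis .
  qed
  define Q where "Q = exp (- (\<delta>\<^sup>2 / (2 * n * cc\<^sup>2)))"
  define A where "A k = {\<omega> \<in> space M. Ssum k \<omega> > \<delta>}" for k
  have AM: "A k \<in> sets M" for k
  proof -
    have [measurable]: "Ssum k \<in> borel_measurable M" by (rule meas_generic(4)[OF X_meas])
    show ?thesis unfolding A_def by measurable
  qed
  have Ak: "emeasure M (A k) \<le> ennreal Q" if k: "k \<in> {1..imax}" for k
  proof -
    have [measurable]: "Ssum k \<in> borel_measurable M" by (rule meas_generic(4)[OF X_meas])
    have "emeasure M (A k) = (\<integral>\<^sup>+\<omega>. indicator (A k) \<omega> \<partial>M)" using AM by simp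
    also have "\<dots> \<le> (\<integral>\<^sup>+\<omega>. ennreal (exp (- lam * \<delta>)) * ennreal (exp (lam * Ssum k \<omega>)) \<partial>M)"
    proof (rule nn_integral_mono)
      fix \<omega> assume "\<omega> \<in> space M"
      show "indicator (A k) \<omega> \<le> ennreal (exp (- lam * \<delta>)) * ennreal (exp (lam * Ssum k \<omega>))"
      proof (cases "\<omega> \<in> A k")
        case True
        then have "Ssum k \<omega> > \<delta>" by (simp add: A_def)
        then have "lam * (Ssum k \<omega> - \<delta>) \<ge> 0" using lam0 by simp
        then have "exp (- lam * \<delta>) * exp (lam * Ssum k \<omega>) \<ge> 1"
          by (simp add: exp_add[symmetric] algebra_simps)
        then show ?thesis using True by (simp add: ennreal_mult'[symmetric])
      qed simp
    qed
    also have "\<dots> = ennreal (exp (- lam * \<delta>)) * (\<integral>\<^sup>+\<omega>. ennreal (exp (lam * Ssum k \<omega>)) \<partial>M)"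
      by (rule nn_integral_cmult) measurable
    also have "\<dots> \<le> ennreal (exp (- lam * \<delta>)) * ennreal (exp (real k * (lam\<^sup>2 * cc\<^sup>2 / 2)))"
      by (rule mult_left_mono[OF chain[OF lam0 lamc r0 etaL rd]]) simp
    also have "\<dots> = ennreal (exp (- lam * \<delta> + real k * (lam\<^sup>2 * cc\<^sup>2 / 2)))"
      by (subst exp_add) (simp add: ennreal_mult'[symmetric])
    also have "\<dots> \<le> ennreal Q"
    proof (rule ennreal_leI)
      have kn: "real k \<le> n" using k by (simp add: n_def)
      have "real k * (lam\<^sup>2 * cc\<^sup>2 / 2) \<le> n * (lam\<^sup>2 * cc\<^sup>2 / 2)" using kn by (intro mult_right_mono) auto
      moreover have "- lam * \<delta> + n * (lam\<^sup>2 * cc\<^sup>2 / 2) = - (\<delta>\<^sup>2 / (2 * n * cc\<^sup>2))"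
        using ccpos n1 by (simp add: lam_def power2_eq_square field_simps)
      ultimately have "- lam * \<delta> + real k * (lam\<^sup>2 * cc\<^sup>2 / 2) \<le> - (\<delta>\<^sup>2 / (2 * n * cc\<^sup>2))" by linarith
      then show "exp (- lam * \<delta> + real k * (lam\<^sup>2 * cc\<^sup>2 / 2)) \<le> Q" unfolding Q_def by simp
    qed
    finally show ?thesis .
  qed
  have sub: "space M - {\<omega> \<in> space M. \<forall>j\<in>{1..imax}. norm (X j \<omega> - xs) \<le> r} \<subseteq> (\<Union>k\<in>{1..imax}. A k)"
  proof
    fix \<omega> assume "\<omega> \<in> space M - {\<omega> \<in> space M. \<forall>j\<in>{1..imax}. norm (X j \<omega> - xs) \<le> r}"
    then have \<omega>: "\<omega> \<in> space M" and bad: "\<not> (\<forall>j\<in>{1..imax}. norm (X j \<omega> - xs) \<le> r)" by auto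
    from exit_time[OF \<omega> bad r0] obtain k where "k \<in> {1..imax}" "Ssum k \<omega> > \<delta>"
      unfolding \<delta>_def n_def by blast
    then show "\<omega> \<in> (\<Union>k\<in>{1..imax}. A k)" using \<omega> by (auto simp: A_def)
  qed
  have "emeasure M (space M - {\<omega> \<in> space M. \<forall>j\<in>{1..imax}. norm (X j \<omega> - xs) \<le> r}) \<le> emeasure M (\<Union>k\<in>{1..imax}. A k)"
    using sub AM by (intro emeasure_mono) auto
  also have "\<dots> \<le> (\<Sum>k\<in>{1..imax}. emeasure M (A k))"
    using AM by (intro emeasure_subadditive_finite) auto
  also have "\<dots> \<le> (\<Sum>k\<in>{1..imax}. ennreal Q)" using Ak by (intro sum_mono) auto
  also have "\<dots> = ennreal (n * Q)" unfolding n_def Q_def by (simp add: ennreal_of_nat_eq_real_of_nat ennreal_mult'[symmetric])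
  finally have em: "emeasure M (space M - {\<omega> \<in> space M. \<forall>j\<in>{1..imax}. norm (X j \<omega> - xs) \<le> r}) \<le> ennreal (n * Q)" .
  have "measure M (space M - {\<omega> \<in> space M. \<forall>j\<in>{1..imax}. norm (X j \<omega> - xs) \<le> r}) \<le> n * Q"
    unfolding measure_def using em n1 by (intro enn2real_leI) (auto simp: Q_def)
  also have "\<dots> \<le> n * (Q + exp (- (C\<^sup>2 - real CARD('d)) / 8))"
    using n1 by (intro mult_left_mono) auto
  finally show ?thesis unfolding n_def Q_def \<delta>_def D0_def cc_def .
qed

end

theorem lemma2:
  fixes M :: "'a measure"
    and F :: "real^'d \<Rightarrow> real" and gradF :: "real^'d \<Rightarrow> real^'d"
    and L S r \<eta> C\<^sub>\<xi> :: real and xs x0 :: "real^'d"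
    and X \<zeta> \<xi> :: "nat \<Rightarrow> 'a \<Rightarrow> real^'d" and imax :: nat
  assumes M: "prob_space M"
    and convF: "convex_on UNIV F"
    and gradF: "\<And>x. (F has_derivative (\<lambda>h. gradF x \<bullet> h)) (at x)"
    and smooth: "\<And>x y. norm (gradF x - gradF y) \<le> L * norm (x - y)"
    and minim: "\<And>x. F xs \<le> F x"
    and \<zeta>_meas: "\<And>i. \<zeta> i \<in> borel_measurable M"
    and \<zeta>_int: "\<And>i k. integrable M (\<lambda>\<omega>. \<zeta> i \<omega> $ k)"
    and \<zeta>_mean: "\<And>i k. AE \<omega> in M.
                  real_cond_exp M (gen_sigma M (X ` {..i})) (\<lambda>\<omega>. \<zeta> i \<omega> $ k) \<omega> = 0"
    and \<zeta>_bdd: "\<And>i \<omega>. \<omega> \<in> space M \<Longrightarrow> (\<forall>j\<le>i. norm (X j \<omega> - xs) \<le> r) \<Longrightarrow> norm (\<zeta> i \<omega>) \<le> S"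
    and \<xi>_meas: "\<And>i. \<xi> i \<in> borel_measurable M"
    and \<xi>_gauss: "\<And>i. std_gaussian_vec M (\<xi> i)"
    and \<xi>_indep: "\<And>i. prob_space.indep_set M
                     (sets (gen_sigma M (insert (\<zeta> i) (X ` {..i}))))
                     (sets (gen_sigma M {\<xi> i}))"
    and X0: "\<And>\<omega>. \<omega> \<in> space M \<Longrightarrow> X 0 \<omega> = x0"
    and x0r: "norm (x0 - xs) \<le> r"
    and Xrec: "\<And>i \<omega>. \<omega> \<in> space M \<Longrightarrow>
                 X (Suc i) \<omega> = X i \<omega> - \<eta> *\<^sub>R (gradF (X i \<omega>) + \<zeta> i \<omega>) + sqrt \<eta> *\<^sub>R \<xi> i \<omega>"
    and \<eta>_pos: "\<eta> > 0"
    and rbig: "r\<^sup>2 > (norm (x0 - xs))\<^sup>2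
                 + real imax * (2 * \<eta>\<^sup>2 * (S\<^sup>2 + L\<^sup>2 * r\<^sup>2) + \<eta> * real CARD('d))"
    and C\<xi>: "C\<^sub>\<xi> \<ge> sqrt (2 * real CARD('d))"
  shows "measure M (space M - {\<omega> \<in> space M. \<forall>j\<in>{1..imax}. norm (X j \<omega> - xs) \<le> r})
         \<le> real imax *
            (exp (- ((r\<^sup>2 - (norm (x0 - xs))\<^sup>2
                       - real imax * (2 * \<eta>\<^sup>2 * (S\<^sup>2 + L\<^sup>2 * r\<^sup>2) + \<eta> * real CARD('d)))\<^sup>2
                     / (2 * real imax * (2 * \<eta> * S * r
                          + 2 * sqrt \<eta> * C\<^sub>\<xi> * (r + \<eta> * S + \<eta> * L * r) + \<eta> * C\<^sub>\<xi>\<^sup>2)\<^sup>2)))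
             + exp (- (C\<^sub>\<xi>\<^sup>2 - real CARD('d)) / 8))"
proof -
  interpret L2setting M F gradF L S r \<eta> C\<^sub>\<xi> xs x0 X \<zeta> \<xi> imax
    by (rule L2setting.intro[OF M convF gradF smooth minim \<zeta>_meas \<zeta>_int \<zeta>_mean \<zeta>_bdd
          \<xi>_meas \<xi>_gauss \<xi>_indep X0 x0r Xrec \<eta>_pos rbig C\<xi>])
  show ?thesis by (rule main_bound)
qed

end
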